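(* Let $A$ be the symmetric adjacency matrix of an undirected random graph on $n$ nodes with $A_{ii}=0$ and $\{A_{ij}\}_{i<j}$ independent with $A_{ij}\sim\mathrm{Bernoulli}(P_{ij})$, where $P$ is a symmetric probability matrix. Let $\delta^{(1)},\dots,\delta^{(M)}$ be a nested sequence of network models (with sets of allowed probability matrices $\mathcal P^{(1)}\subset\cdots\subset\mathcal P^{(M)}$) and let $m^*\in[M]$ be the true model index, i.e. $P\in\mathcal P^{(m^* )}$ but $P\notin\mathcal P^{(m')}$ for all $m'<m^*$. Fix a training proportion $w_n\in(0,1)$ and form a random training edge set $\mathcal E$ by placing each pair $(i,j)$, $i<j$, in $\mathcal E$ independently with probability $w_n$ (independently of $A$; $(j,i)$ is assigned with $(i,j)$), with $\mathcal E^c$ the complementary evaluation set of off-diagonal pairs. For each $m\in[M]$ let $\widehat P^{(m)}$ be an estimator of $P$ computed from the training entries only, and define $$L_m(A,\mathcal E^c)=\frac{1}{|\mathcal E^c|}\sum_{(i,j)\in\mathcal E^c}\big(A_{ij}-\widehat P^{(m)}_{ij}\big)^2+d_m\lambda_n,\qquad \widehat m=\arg\min_{m\in[M]}L_m(A,\mathcal E^c),$$ where $d_1<d_2<\dots<d_M$ is an increasing sequence of model complexities and $\lambda_n>0$ is a (deterministic or random) penalty. Assume: (1) for every $m'\ge m^*$, $\frac{1}{n^2}\|\widehat P^{(m')}-P\|_F^2=O_{\mathbb P}(a_{n,w,m'})$ for some $a_{n,w,m'}=o(1)$; (2) for every $m'<m^*$, $\frac{1}{|\mathcal E^c|}\sum_{(i,j)\in\mathcal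 E^c}(\widehat P^{(m')}_{ij}-P_{ij})^2=\Omega_{\mathbb P}(b_{n,w,m'})$ for some $b_{n,w,m'}>0$; (3) with $a_{n,w}:=\max_{m'\ge m^*}a_{n,w,m'}$ and $b_{n,w}:=\min_{m'<m^*}b_{n,w,m'}$, we have $(1-w_n)b_{n,w}\big/\max\{\sqrt{a_{n,w}(1-w_n)\|P\|_\infty},\,a_{n,w}\}=\omega(1)$ and $n^2(1-w_n)b_{n,w}=\omega(1)$. If $\max\{\sqrt{a_{n,w}(1-w_n)\|P\|_\infty},\,a_{n,w}\}\ll(1-w_n)\lambda_n\ll(1-w_n)b_{n,w}$, then $\mathbb P(\widehat m=m^* )\to1$ as $n\to\infty$.
   Context: A list of network models $\delta^{(\ell)}$, $\ell\in[M]$, is nested if $\mathcal P^{(\ell)}\subset\mathcal P^{(\ell')}$ for $\ell<\ell'$, where $\mathcal P^{(\ell)}$ is the set of probability matrices allowed under $\delta^{(\ell)}$. $\|M\|_F$ is the Frobenius norm and $\|M\|_\infty=\max_{ij}|M_{ij}|$; $\|P\|_\infty$ may tend to $0$. $x_n\ll y_n$ means $x_n/y_n\to0$ (in probability when random). $O_{\mathbb P},\Omega_{\mathbb P}$ denote stochastic upper/lower order bounds; $\omega(1)$ means tending to infinity. *)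

theory Defs
  imports "HOL-Probability.Probability"
begin

text \<open>Sample outcome: for each unordered pair (i,j) with i<j (encoded as the ordered
pair with i<j) a pair (edge present in A, pair placed in the training set E).\<close>
type_synonym outcome = "nat \<times> nat \<Rightarrow> bool \<times> bool"

definition pairs :: "nat \<Rightarrow> (nat \<times> nat) set" where
  "pairs n = {(i,j). i < j \<and> j < n}"

definition sample_pmf :: "nat \<Rightarrow> (nat \<Rightarrow> nat \<Rightarrow> real) \<Rightarrow> real \<Rightarrow> outcome pmf" where
  "sample_pmf n P w = Pi_pmf (pairs n) (False, False)
      (\<lambda>(i,j). pair_pmf (bernoulli_pmf (P i j)) (bernoulli_pmf w))"

definition adj :: "outcome \<Rightarrow> nat \<Rightarrow> nat \<Rightarrow> real" where
  "adj \<omega> i j = (if i < j then (if fst (\<omega> (i,j)) then 1 else 0)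
                 else if j < i then (if fst (\<omega> (j,i)) then 1 else 0) else 0)"

definition in_train :: "outcome \<Rightarrow> nat \<Rightarrow> nat \<Rightarrow> bool" where
  "in_train \<omega> i j = (i \<noteq> j \<and> snd (\<omega> (min i j, max i j)))"

definition eval_set :: "nat \<Rightarrow> outcome \<Rightarrow> (nat \<times> nat) set" where
  "eval_set n \<omega> = {(i,j). i < n \<and> j < n \<and> i \<noteq> j \<and> \<not> in_train \<omega> i j}"

text \<open>An estimator uses only training entries (the set E and A restricted to E).\<close>
definition training_only :: "nat \<Rightarrow> (outcome \<Rightarrow> nat \<Rightarrow> nat \<Rightarrow> real) \<Rightarrow> bool" where
  "training_only n Ph \<longleftrightarrow> (\<forall>\<omega> \<omega>'. (\<forall>p\<in>pairs n. snd (\<omega> p) = snd (\<omega>' p) \<and>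
        (snd (\<omega> p) \<longrightarrow> fst (\<omega> p) = fst (\<omega>' p))) \<longrightarrow> Ph \<omega> = Ph \<omega>')"

definition sup_norm :: "nat \<Rightarrow> (nat \<Rightarrow> nat \<Rightarrow> real) \<Rightarrow> real" where
  "sup_norm n P = Max (insert 0 {\<bar>P i j\<bar> | i j. i < n \<and> j < n})"

definition frob_sq :: "nat \<Rightarrow> (nat \<Rightarrow> nat \<Rightarrow> real) \<Rightarrow> real" where
  "frob_sq n M = (\<Sum>i<n. \<Sum>j<n. (M i j)\<^sup>2)"

definition bigO_P :: "(nat \<Rightarrow> 'a pmf) \<Rightarrow> (nat \<Rightarrow> 'a \<Rightarrow> real) \<Rightarrow> (nat \<Rightarrow> real) \<Rightarrow> bool" where
  "bigO_P \<Omega> X a \<longleftrightarrow> (\<forall>\<epsilon>>0. \<exists>C. \<exists>N. \<forall>n\<ge>N.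
      measure_pmf.prob (\<Omega> n) {\<omega>. \<bar>X n \<omega>\<bar> > C * a n} \<le> \<epsilon>)"

definition bigOmega_P :: "(nat \<Rightarrow> 'a pmf) \<Rightarrow> (nat \<Rightarrow> 'a \<Rightarrow> real) \<Rightarrow> (nat \<Rightarrow> real) \<Rightarrow> bool" where
  "bigOmega_P \<Omega> X b \<longleftrightarrow> (\<forall>\<epsilon>>0. \<exists>c>0. \<exists>N. \<forall>n\<ge>N.
      measure_pmf.prob (\<Omega> n) {\<omega>. \<bar>X n \<omega>\<bar> < c * b n} \<le> \<epsilon>)"

definition ll_P :: "(nat \<Rightarrow> 'a pmf) \<Rightarrow> (nat \<Rightarrow> 'a \<Rightarrow> real) \<Rightarrow> (nat \<Rightarrow> 'a \<Rightarrow> real) \<Rightarrow> bool" where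
  "ll_P \<Omega> X Y \<longleftrightarrow> (\<forall>\<epsilon>>0. (\<lambda>n. measure_pmf.prob (\<Omega> n) {\<omega>. \<bar>X n \<omega> / Y n \<omega>\<bar> > \<epsilon>})
      \<longlonglongrightarrow> 0)"

definition cv_loss :: "nat \<Rightarrow> (outcome \<Rightarrow> nat \<Rightarrow> nat \<Rightarrow> real) \<Rightarrow> real \<Rightarrow> real \<Rightarrow> outcome \<Rightarrow> real" where
  "cv_loss n Ph dm lam \<omega> =
     (1 / real (card (eval_set n \<omega>))) *
       (\<Sum>(i,j)\<in>eval_set n \<omega>. (adj \<omega> i j - Ph \<omega> i j)\<^sup>2) + dm * lam"

definition argmin_set :: "nat \<Rightarrow> (nat \<Rightarrow> real) \<Rightarrow> nat set" where
  "argmin_set M L = {m \<in> {1..M}. \<forall>m'\<in>{1..M}. L m \<le> L m'}"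

end

theory Submission
  imports Defs
begin

lemma fin_Pi_pmf:
  assumes "finite I" "\<And>i. finite (set_pmf (D i))"
  shows "finite (set_pmf (Pi_pmf I dflt D))"
  using assms by (subst set_Pi_pmf) (auto intro!: finite_PiE_dflt)

lemma finite_pairs: "finite (pairs n)"
  by (rule finite_subset[of _ "{..<n} \<times> {..<n}"]) (auto simp: pairs_def)

lemma fin_sample: "finite (set_pmf (sample_pmf n P w))"
  unfolding sample_pmf_def
  by (rule fin_Pi_pmf[OF finite_pairs]) (rule finite_subset[of _ UNIV], auto)

lemma integral_pair_pmf_fin:
  fixes u :: "'a \<times> 'b \<Rightarrow> real"
  assumes fX: "finite (set_pmf X)" and fY: "finite (set_pmf Y)"
  shows "(\<integral>z. u z \<partial>pair_pmf X Y) = (\<integral>x. (\<integral>y. u (x,y) \<partial>Y) \<partial>X)"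
proof -
  have "(\<integral>z. u z \<partial>pair_pmf X Y) = (\<Sum>z\<in>set_pmf X \<times> set_pmf Y. u z * pmf (pair_pmf X Y) z)"
    by (rule integral_measure_pmf_real) (use assms in auto)
  also have "\<dots> = (\<Sum>x\<in>set_pmf X. \<Sum>y\<in>set_pmf Y. u (x,y) * (pmf X x * pmf Y y))"
    by (subst sum.cartesian_product) (auto intro!: sum.cong simp: pmf_pair)
  also have "\<dots> = (\<Sum>x\<in>set_pmf X. (\<Sum>y\<in>set_pmf Y. u (x,y) * pmf Y y) * pmf X x)"
    by (auto simp: sum_distrib_left sum_distrib_right mult_ac intro!: sum.cong)
  also have "\<dots> = (\<Sum>x\<in>set_pmf X. (\<integral>y. u (x,y) \<partial>Y) * pmf X x)"
    by (intro sum.cong refl) (subst integral_measure_pmf_real[of "set_pmf Y"], use fY in auto)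
  also have "\<dots> = (\<integral>x. (\<integral>y. u (x,y) \<partial>Y) \<partial>X)"
    by (rule integral_measure_pmf_real[symmetric]) (use fX in auto)
  finally show ?thesis .
qed

lemma Pi_split:
  fixes H :: "('k \<Rightarrow> 'v) \<Rightarrow> real"
  assumes fin: "finite I" and p: "p \<in> I" and finD: "\<And>i. finite (set_pmf (D i))"
  shows "measure_pmf.expectation (Pi_pmf I dflt D) H =
         measure_pmf.expectation (D p) (\<lambda>y. measure_pmf.expectation (Pi_pmf I dflt D) (\<lambda>f. H (f(p:=y))))"
proof -
  have I: "insert p (I - {p}) = I" using p by auto
  have "Pi_pmf (insert p (I - {p})) dflt D = map_pmf (\<lambda>(y,f). f(p:=y)) (pair_pmf (D p) (Pi_pmf (I-{p}) dflt D))"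
    by (rule Pi_pmf_insert) (use fin in auto)
  hence eq: "Pi_pmf I dflt D = map_pmf (\<lambda>(y,f). f(p:=y)) (pair_pmf (D p) (Pi_pmf (I-{p}) dflt D))"
    unfolding I .
  have rem: "Pi_pmf (I - {p}) dflt D = map_pmf (\<lambda>f. f(p := dflt)) (Pi_pmf I dflt D)"
    by (rule Pi_pmf_remove[OF fin])
  have "measure_pmf.expectation (Pi_pmf I dflt D) H =
        (\<integral>z. H ((snd z)(p := fst z)) \<partial>pair_pmf (D p) (Pi_pmf (I-{p}) dflt D))"
    by (subst eq) (simp add: case_prod_beta)
  also have "\<dots> = (\<integral>y. (\<integral>f. H (f(p := y)) \<partial>Pi_pmf (I-{p}) dflt D) \<partial>D p)"
    by (subst integral_pair_pmf_fin) (auto intro: finD fin_Pi_pmf fin)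
  also have "\<dots> = (\<integral>y. (\<integral>f. H (f(p := y)) \<partial>Pi_pmf I dflt D) \<partial>D p)"
    by (simp add: rem)
  finally show ?thesis .
qed

lemma Pi_decouple:
  fixes F :: "('k \<Rightarrow> 'v) \<Rightarrow> real" and g :: "'v \<Rightarrow> real"
  assumes fin: "finite I" and p: "p \<in> I" and finD: "\<And>i. finite (set_pmf (D i))"
    and inv: "\<And>f y. F (f(p := y)) = F f"
  shows "measure_pmf.expectation (Pi_pmf I dflt D) (\<lambda>f. g (f p) * F f) =
         measure_pmf.expectation (D p) g * measure_pmf.expectation (Pi_pmf I dflt D) F"
  by (subst Pi_split[OF fin p finD]) (simp add: inv)

lemma Pi_decouple_fst:
  fixes F :: "('k \<Rightarrow> 'a \<times> 'b) \<Rightarrow> real" and g :: "'a \<Rightarrow> real"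
  assumes fin: "finite I" and p: "p \<in> I" and finD: "\<And>i. finite (set_pmf (D i))"
    and Dp: "D p = pair_pmf X Y" and finX: "finite (set_pmf X)" and finY: "finite (set_pmf Y)"
    and inv: "\<And>f a. F (f(p := (a, snd (f p)))) = F f"
  shows "measure_pmf.expectation (Pi_pmf I dflt D) (\<lambda>f. g (fst (f p)) * F f) =
         measure_pmf.expectation X g * measure_pmf.expectation (Pi_pmf I dflt D) F"
proof -
  define a0 where "a0 = (SOME a. a \<in> set_pmf X)"
  define J where "J = (\<lambda>e. measure_pmf.expectation (Pi_pmf I dflt D) (\<lambda>f. F (f(p := (a0, e)))))"
  have key: "F (f(p := (a, e))) = F (f(p := (a0, e)))" for f a e
    using inv[of "f(p := (a0, e))" a] by simp
  have K: "\<And>y. (\<integral>f. F (f(p := y)) \<partial>Pi_pmf I dflt D) = J (snd y)"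
    unfolding J_def by (intro Bochner_Integration.integral_cong refl) (metis key prod.collapse)
  have "measure_pmf.expectation (Pi_pmf I dflt D) (\<lambda>f. g (fst (f p)) * F f) =
        (\<integral>y. g (fst y) * J (snd y) \<partial>D p)"
    by (subst Pi_split[OF fin p finD]) (simp add: K)
  also have "\<dots> = (\<integral>x. (\<integral>e. g x * J e \<partial>Y) \<partial>X)"
    unfolding Dp by (subst integral_pair_pmf_fin[OF finX finY]) simp
  also have "\<dots> = measure_pmf.expectation X g * measure_pmf.expectation Y J"
    by (simp add: mult.commute)
  moreover have "measure_pmf.expectation (Pi_pmf I dflt D) F = (\<integral>y. J (snd y) \<partial>D p)"
    by (subst Pi_split[OF fin p finD]) (simp add: K)
  moreover have "(\<integral>y. J (snd y) \<partial>D p) = measure_pmf.expectation Y J"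
    unfolding Dp by simp
  ultimately show ?thesis by simp
qed

lemma eval_set_split:
  "eval_set n x = {p\<in>pairs n. \<not> snd (x p)} \<union> (\<lambda>(i,j). (j,i)) ` {p\<in>pairs n. \<not> snd (x p)}"
  unfolding eval_set_def pairs_def in_train_def
  by (auto simp: image_iff min_def max_def split: if_splits)

lemma eval_sum:
  fixes f :: "nat \<Rightarrow> nat \<Rightarrow> real"
  shows "(\<Sum>(i,j)\<in>eval_set n x. f i j) =
         (\<Sum>(i,j)\<in>pairs n. if snd (x (i,j)) then 0 else f i j + f j i)"
proof -
  define S where "S = {p\<in>pairs n. \<not> snd (x p)}"
  have finS: "finite S" unfolding S_def using finite_pairs by auto
  have disj: "S \<inter> (\<lambda>(i,j). (j,i)) ` S = {}"
    unfolding S_def pairs_def by auto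
  have inj: "inj_on (\<lambda>(i,j). (j::nat,i::nat)) S"
    by (auto simp: inj_on_def)
  have "(\<Sum>(i,j)\<in>eval_set n x. f i j) = (\<Sum>(i,j)\<in>S. f i j) + (\<Sum>(i,j)\<in>(\<lambda>(i,j). (j,i)) ` S. f i j)"
    unfolding eval_set_split S_def[symmetric]
    by (rule sum.union_disjoint) (use finS disj in auto)
  also have "(\<Sum>(i,j)\<in>(\<lambda>(i,j). (j,i)) ` S. f i j) = (\<Sum>(i,j)\<in>S. f j i)"
    by (subst sum.reindex[OF inj]) (auto simp: case_prod_beta intro!: sum.cong)
  also have "(\<Sum>(i,j)\<in>S. f i j) + (\<Sum>(i,j)\<in>S. f j i) = (\<Sum>(i,j)\<in>S. f i j + f j i)"
    by (simp add: sum.distrib[symmetric] case_prod_beta)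
  also have "\<dots> = (\<Sum>(i,j)\<in>pairs n. if snd (x (i,j)) then 0 else f i j + f j i)"
    unfolding S_def using finite_pairs[of n]
    by (simp add: sum.inter_filter case_prod_beta if_distrib) (auto intro!: sum.cong)
  finally show ?thesis .
qed

definition Kc :: "nat \<Rightarrow> outcome \<Rightarrow> nat" where
  "Kc n x = card {p\<in>pairs n. \<not> snd (x p)}"

lemma card_eval: "card (eval_set n x) = 2 * Kc n x"
proof -
  have "real (card (eval_set n x)) = (\<Sum>(i,j)\<in>eval_set n x. (1::real))"
    by simp
  also have "\<dots> = (\<Sum>(i,j)\<in>pairs n. if snd (x (i,j)) then 0 else 1 + 1)"
    by (rule eval_sum)
  also have "\<dots> = (\<Sum>p\<in>pairs n. if \<not> snd (x p) then 2 else 0)"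
    by (auto simp: case_prod_beta intro!: sum.cong)
  also have "\<dots> = (\<Sum>p\<in>{p\<in>pairs n. \<not> snd (x p)}. 2)"
    using finite_pairs by (subst sum.inter_filter) auto
  also have "\<dots> = 2 * real (Kc n x)" by (simp add: Kc_def)
  finally show ?thesis by linarith
qed

lemma sample_D: "(i,j) \<in> pairs n \<Longrightarrow>
   (\<lambda>(i,j). pair_pmf (bernoulli_pmf (P i j)) (bernoulli_pmf w)) (i,j) =
   pair_pmf (bernoulli_pmf (P i j)) (bernoulli_pmf w)"
  by simp

lemma decouple_fst:
  fixes F :: "outcome \<Rightarrow> real" and g :: "bool \<Rightarrow> real"
  assumes p: "(i,j) \<in> pairs n"
    and inv: "\<And>x a. F (x((i,j) := (a, snd (x (i,j))))) = F x"
  shows "measure_pmf.expectation (sample_pmf n P w) (\<lambda>x. g (fst (x (i,j))) * F x) =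
         measure_pmf.expectation (bernoulli_pmf (P i j)) g * measure_pmf.expectation (sample_pmf n P w) F"
  unfolding sample_pmf_def
  by (rule Pi_decouple_fst[OF finite_pairs p, where Y = "bernoulli_pmf w"])
     (auto intro: finite_subset[of _ UNIV] inv)

lemma decouple_whole:
  fixes F :: "outcome \<Rightarrow> real" and g :: "bool \<times> bool \<Rightarrow> real"
  assumes p: "(i,j) \<in> pairs n"
    and inv: "\<And>x y. F (x((i,j) := y)) = F x"
  shows "measure_pmf.expectation (sample_pmf n P w) (\<lambda>x. g (x (i,j)) * F x) =
         measure_pmf.expectation (pair_pmf (bernoulli_pmf (P i j)) (bernoulli_pmf w)) g *
         measure_pmf.expectation (sample_pmf n P w) F"
  unfolding sample_pmf_def
  by (subst Pi_decouple[OF finite_pairs p]) (auto intro: finite_subset[of _ UNIV] inv)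

lemma pmf_markov:
  fixes u :: "'a \<Rightarrow> real"
  assumes "finite (set_pmf Q)" "\<And>x. 0 \<le> u x" "0 < t"
  shows "measure_pmf.prob Q {x. t \<le> u x} \<le> measure_pmf.expectation Q u / t"
  using integral_Markov_inequality_measure[of "measure_pmf Q" u UNIV t]
    integrable_measure_pmf_finite[OF assms(1)] assms by auto

lemma integrable_sample: "integrable (measure_pmf (sample_pmf n P w)) (f :: outcome \<Rightarrow> real)"
  by (rule integrable_measure_pmf_finite[OF fin_sample])

lemma Kc_sum: "real (Kc n x) = (\<Sum>p\<in>pairs n. if snd (x p) then 0 else 1)"
proof -
  have "real (Kc n x) = (\<Sum>p\<in>{p\<in>pairs n. \<not> snd (x p)}. 1)" by (simp add: Kc_def)
  also have "\<dots> = (\<Sum>p\<in>pairs n. if \<not> snd (x p) then 1 else 0)"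
    by (rule sum.inter_filter[OF finite_pairs])
  also have "\<dots> = (\<Sum>p\<in>pairs n. if snd (x p) then 0 else 1)"
    by (intro sum.cong) auto
  finally show ?thesis .
qed

lemma card_pairs: "real (card (pairs n)) = real n * (real n - 1) / 2"
proof -
  have "pairs n = (\<lambda>(j,i). (i,j)) ` (SIGMA j:{..<n}. {..<j})"
    by (auto simp: pairs_def image_iff)
  moreover have "inj_on (\<lambda>(j::nat,i::nat). (i,j)) (SIGMA j:{..<n}. {..<j})"
    by (auto simp: inj_on_def)
  ultimately have "card (pairs n) = card (SIGMA j:{..<n}. {..<j})"
    by (simp add: card_image)
  also have "\<dots> = (\<Sum>j<n. j)" by (subst card_SigmaI) auto
  finally have "real (card (pairs n)) = (\<Sum>j<n. real j)" by simp
  also have "\<dots> = real n * (real n - 1) / 2"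
    by (induction n) (auto simp: field_simps)
  finally show ?thesis .
qed

lemma Kvar:
  assumes w: "0 \<le> w" "w \<le> 1"
  shows "measure_pmf.expectation (sample_pmf n P w)
           (\<lambda>x. (real (Kc n x) - real (card (pairs n)) * (1 - w))\<^sup>2)
         \<le> real (card (pairs n)) * (1 - w)"
proof -
  define Y :: "nat \<times> nat \<Rightarrow> outcome \<Rightarrow> real" where "Y = (\<lambda>p x. (if snd (x p) then 0 else 1) - (1 - w) :: real)"
  define \<Omega> where "\<Omega> = sample_pmf n P w"
  have sumY: "real (Kc n x) - real (card (pairs n)) * (1 - w) = (\<Sum>p\<in>pairs n. Y p x)" for x
    by (simp add: Kc_sum Y_def sum_subtractf)
  have EY: "measure_pmf.expectation (pair_pmf (bernoulli_pmf a) (bernoulli_pmf w))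
                (\<lambda>y. (if snd y then 0 else 1) - (1 - w)) = 0" for a
  proof -
    have "measure_pmf.expectation (pair_pmf (bernoulli_pmf a) (bernoulli_pmf w))
                (\<lambda>y. (\<lambda>e. (if e then 0 else 1) - (1 - w)) (snd y)) = 
          measure_pmf.expectation (bernoulli_pmf w) (\<lambda>e. (if e then 0 else 1) - (1 - w))"
      by (rule expectation_pair_pmf_snd)
    also have "\<dots> = 0" using w by (simp add: algebra_simps)
    finally show ?thesis by simp
  qed
  have EY2: "measure_pmf.expectation (pair_pmf (bernoulli_pmf a) (bernoulli_pmf w))
                (\<lambda>y. ((if snd y then 0 else 1) - (1 - w)) * ((if snd y then 0 else 1) - (1 - w))) \<le> 1 - w" for a
  proof -
    have "measure_pmf.expectation (pair_pmf (bernoulli_pmf a) (bernoulli_pmf w))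
                (\<lambda>y. (\<lambda>e. ((if e then 0 else 1) - (1 - w)) * ((if e then 0 else 1) - (1 - w))) (snd y)) = 
          measure_pmf.expectation (bernoulli_pmf w) (\<lambda>e. ((if e then 0 else 1) - (1 - w)) * ((if e then 0 else 1) - (1 - w)))"
      by (rule expectation_pair_pmf_snd)
    also have "\<dots> = w * (1 - w)" using w by (simp add: algebra_simps power2_eq_square)
    also have "\<dots> \<le> 1 - w" using w by (simp add: mult_left_le_one_le)
    finally show ?thesis by simp
  qed
  have off: "measure_pmf.expectation \<Omega> (\<lambda>x. Y p x * Y q x) = 0"
    if p: "p \<in> pairs n" and q: "q \<noteq> p" for p q
  proof -
    obtain i j where pij: "p = (i,j)" by (cases p)
    have "measure_pmf.expectation \<Omega> (\<lambda>x. (\<lambda>y. (if snd y then 0 else 1) - (1 - w)) (x (i,j)) * Y q x) =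
          measure_pmf.expectation (pair_pmf (bernoulli_pmf (P i j)) (bernoulli_pmf w))
            (\<lambda>y. (if snd y then 0 else 1) - (1 - w)) * measure_pmf.expectation \<Omega> (Y q)"
      unfolding \<Omega>_def by (rule decouple_whole) (use p q pij in \<open>auto simp: Y_def\<close>)
    thus ?thesis by (simp add: EY Y_def pij)
  qed
  have diag: "measure_pmf.expectation \<Omega> (\<lambda>x. Y p x * Y p x) \<le> 1 - w"
    if p: "p \<in> pairs n" for p
  proof -
    obtain i j where pij: "p = (i,j)" by (cases p)
    have "measure_pmf.expectation \<Omega> (\<lambda>x. (\<lambda>y. ((if snd y then 0 else 1) - (1 - w)) * ((if snd y then 0 else 1) - (1 - w))) (x (i,j)) * 1) =
          measure_pmf.expectation (pair_pmf (bernoulli_pmf (P i j)) (bernoulli_pmf w))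
            (\<lambda>y. ((if snd y then 0 else 1) - (1 - w)) * ((if snd y then 0 else 1) - (1 - w))) * measure_pmf.expectation \<Omega> (\<lambda>_. 1)"
      unfolding \<Omega>_def by (rule decouple_whole) (use p pij in auto)
    thus ?thesis using EY2[of "P i j"] by (simp add: Y_def pij)
  qed
  have "measure_pmf.expectation \<Omega> (\<lambda>x. (real (Kc n x) - real (card (pairs n)) * (1 - w))\<^sup>2)
        = measure_pmf.expectation \<Omega> (\<lambda>x. \<Sum>p\<in>pairs n. \<Sum>q\<in>pairs n. Y p x * Y q x)"
    by (simp add: sumY power2_eq_square sum_product)
  also have "\<dots> = (\<Sum>p\<in>pairs n. \<Sum>q\<in>pairs n. measure_pmf.expectation \<Omega> (\<lambda>x. Y p x * Y q x))"
    unfolding \<Omega>_def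
    by (simp add: Bochner_Integration.integral_sum integrable_sample)
  also have "\<dots> = (\<Sum>p\<in>pairs n. measure_pmf.expectation \<Omega> (\<lambda>x. Y p x * Y p x))"
  proof (rule sum.cong[OF refl])
    fix p assume p: "p \<in> pairs n"
    have "(\<Sum>q\<in>pairs n. measure_pmf.expectation \<Omega> (\<lambda>x. Y p x * Y q x)) =
          (\<Sum>q\<in>pairs n. if q = p then measure_pmf.expectation \<Omega> (\<lambda>x. Y p x * Y p x) else 0)"
      by (intro sum.cong refl) (auto simp: off p)
    also have "\<dots> = measure_pmf.expectation \<Omega> (\<lambda>x. Y p x * Y p x)"
      using p finite_pairs[of n] by (simp add: sum.delta')
    finally show "(\<Sum>q\<in>pairs n. measure_pmf.expectation \<Omega> (\<lambda>x. Y p x * Y q x)) =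
          measure_pmf.expectation \<Omega> (\<lambda>x. Y p x * Y p x)" .
  qed
  also have "\<dots> \<le> (\<Sum>p\<in>pairs n. 1 - w)"
    by (rule sum_mono) (rule diag)
  also have "\<dots> = real (card (pairs n)) * (1 - w)" by simp
  finally show ?thesis unfolding \<Omega>_def .
qed

lemma K_small:
  assumes c: "0 < c" "c \<le> 1/2" and w: "0 \<le> w" "w \<le> 1"
  shows "measure_pmf.prob (sample_pmf n P w)
           {x. 0 < Kc n x \<and> real (Kc n x) < c * (real (card (pairs n)) * (1 - w))} \<le> 4 * c"
proof -
  define \<mu> where "\<mu> = real (card (pairs n)) * (1 - w)"
  have mu0: "0 \<le> \<mu>" unfolding \<mu>_def using w by simp
  show ?thesis
  proof (cases "c * \<mu> \<le> 1")
    case True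
    have "{x. 0 < Kc n x \<and> real (Kc n x) < c * \<mu>} = {}"
      using True by auto
    hence "measure_pmf.prob (sample_pmf n P w) {x. 0 < Kc n x \<and> real (Kc n x) < c * \<mu>} = 0"
      by (metis measure_empty)
    thus ?thesis using c unfolding \<mu>_def by simp
  next
    case False
    hence mupos: "\<mu> > 1 / c" using c by (simp add: field_simps)
    hence mpos: "\<mu> > 0" using c by (smt (verit) divide_pos_pos)
    have t: "0 < ((1 - c) * \<mu>)\<^sup>2" using c mpos by simp
    have sub: "{x. 0 < Kc n x \<and> real (Kc n x) < c * \<mu>} \<subseteq>
               {x. ((1 - c) * \<mu>)\<^sup>2 \<le> (real (Kc n x) - \<mu>)\<^sup>2}"
    proof safe
      fix x assume "real (Kc n x) < c * \<mu>"
      hence "(1 - c) * \<mu> \<le> \<mu> - real (Kc n x)" by (simp add: algebra_simps)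
      moreover have "0 \<le> (1 - c) * \<mu>" using c mpos by simp
      ultimately show "((1 - c) * \<mu>)\<^sup>2 \<le> (real (Kc n x) - \<mu>)\<^sup>2"
        by (smt (verit) power_mono power2_minus)
    qed
    have "measure_pmf.prob (sample_pmf n P w) {x. 0 < Kc n x \<and> real (Kc n x) < c * \<mu>}
          \<le> measure_pmf.prob (sample_pmf n P w) {x. ((1 - c) * \<mu>)\<^sup>2 \<le> (real (Kc n x) - \<mu>)\<^sup>2}"
      by (rule measure_pmf.finite_measure_mono[OF sub]) simp
    also have "\<dots> \<le> measure_pmf.expectation (sample_pmf n P w) (\<lambda>x. (real (Kc n x) - \<mu>)\<^sup>2) / ((1 - c) * \<mu>)\<^sup>2"
      by (rule pmf_markov[OF fin_sample _ t]) simp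
    also have "\<dots> \<le> \<mu> / ((1 - c) * \<mu>)\<^sup>2"
      by (rule divide_right_mono) (use Kvar[OF w, of n P] t in \<open>simp_all add: \<mu>_def\<close>)
    also have "\<dots> = 1 / ((1 - c)\<^sup>2 * \<mu>)"
      using mpos by (simp add: power_mult_distrib power2_eq_square)
    also have "\<dots> \<le> 1 / ((1/4) * \<mu>)"
    proof (rule divide_left_mono)
      have "1/2 \<le> 1 - c" using c by simp
      hence "(1/2)\<^sup>2 \<le> (1 - c)\<^sup>2" by (rule power_mono) simp
      thus "1/4 * \<mu> \<le> (1 - c)\<^sup>2 * \<mu>" using mpos
        by (intro mult_right_mono) (simp_all add: power2_eq_square)
    qed (use mpos c in simp_all)
    also have "\<dots> = 4 / \<mu>" by simp
    also have "\<dots> \<le> 4 * c" using mupos c mpos by (simp add: field_simps)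
    finally show ?thesis unfolding \<mu>_def .
  qed
qed

definition Cr :: "nat \<Rightarrow> (nat \<Rightarrow> nat \<Rightarrow> real) \<Rightarrow> (outcome \<Rightarrow> nat \<Rightarrow> nat \<Rightarrow> real) \<Rightarrow> outcome \<Rightarrow> real" where
  "Cr n P D x = (\<Sum>(i,j)\<in>eval_set n x. (adj x i j - P i j) * D x i j)"

definition Ev :: "nat \<Rightarrow> (outcome \<Rightarrow> nat \<Rightarrow> nat \<Rightarrow> real) \<Rightarrow> outcome \<Rightarrow> real" where
  "Ev n D x = (\<Sum>(i,j)\<in>eval_set n x. (D x i j)\<^sup>2)"

definition tinv :: "nat \<Rightarrow> (outcome \<Rightarrow> 'a) \<Rightarrow> bool" where
  "tinv n F \<longleftrightarrow> (\<forall>x p b. p \<in> pairs n \<longrightarrow> \<not> snd (x p) \<longrightarrow> F (x(p := (b, False))) = F x)"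

lemma sq_sum_mult: "(\<Sum>p\<in>S. a p)\<^sup>2 * (c::real) = (\<Sum>p\<in>S. \<Sum>q\<in>S. a p * a q * c)"
  by (simp add: power2_eq_square sum_distrib_left sum_distrib_right mult_ac)

lemma cross_moment:
  fixes D :: "outcome \<Rightarrow> nat \<Rightarrow> nat \<Rightarrow> real" and phi :: "outcome \<Rightarrow> real"
  assumes Pb: "\<And>i j. (i,j) \<in> pairs n \<Longrightarrow> 0 \<le> P i j \<and> P i j \<le> 1"
    and Ps: "\<And>i j. (i,j) \<in> pairs n \<Longrightarrow> P i j \<le> s"
    and Psym: "\<And>i j. (i,j) \<in> pairs n \<Longrightarrow> P j i = P i j"
    and tD: "tinv n D" and tphi: "tinv n phi" and phi0: "\<And>x. 0 \<le> phi x"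
  shows "measure_pmf.expectation (sample_pmf n P w) (\<lambda>x. (Cr n P D x)\<^sup>2 * phi x)
         \<le> 2 * s * measure_pmf.expectation (sample_pmf n P w) (\<lambda>x. Ev n D x * phi x)"
proof -
  define \<Omega> where "\<Omega> = sample_pmf n P w"
  define A :: "nat \<times> nat \<Rightarrow> outcome \<Rightarrow> real" where
    "A = (\<lambda>p x. (if fst (x p) then 1 else 0) - P (fst p) (snd p))"
  define h :: "nat \<times> nat \<Rightarrow> outcome \<Rightarrow> real" where
    "h = (\<lambda>p x. if snd (x p) then 0 else D x (fst p) (snd p) + D x (snd p) (fst p))"
  have Csum: "Cr n P D x = (\<Sum>p\<in>pairs n. A p x * h p x)" for x
  proof -
    have "Cr n P D x = (\<Sum>(i,j)\<in>pairs n. if snd (x (i,j)) then 0 else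
             (adj x i j - P i j) * D x i j + (adj x j i - P j i) * D x j i)"
      unfolding Cr_def by (rule eval_sum)
    also have "\<dots> = (\<Sum>p\<in>pairs n. A p x * h p x)"
    proof (rule sum.cong[OF refl])
      fix p assume p: "p \<in> pairs n"
      obtain i j where pij: "p = (i,j)" by (cases p)
      have ij: "i < j" using p pij by (auto simp: pairs_def)
      show "(case p of (i,j) \<Rightarrow> if snd (x (i,j)) then 0 else
             (adj x i j - P i j) * D x i j + (adj x j i - P j i) * D x j i) = A p x * h p x"
        using ij Psym[of i j] p pij by (auto simp: A_def h_def adj_def algebra_simps)
    qed
    finally show ?thesis .
  qed
  have Evsum: "Ev n D x = (\<Sum>p\<in>pairs n. if snd (x p) then 0 else
                 (D x (fst p) (snd p))\<^sup>2 + (D x (snd p) (fst p))\<^sup>2)" for x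
    unfolding Ev_def by (subst eval_sum) (simp add: case_prod_beta)
  have Dinv: "D (x(p := (b, False))) = D x" if "p \<in> pairs n" "\<not> snd (x p)" for x p b
    using tD that unfolding tinv_def by blast
  have phinv: "phi (x(p := (b, False))) = phi x" if "p \<in> pairs n" "\<not> snd (x p)" for x p b
    using tphi that unfolding tinv_def by blast
  have hinv: "h q (x(p := (b, False))) = h q x" if "p \<in> pairs n" "\<not> snd (x p)" for x p q b
    using that by (auto simp: h_def Dinv)
  have Ainv: "A q (x(p := y)) = A q x" if "q \<noteq> p" for x p q y
    using that by (simp add: A_def)
  have Eg: "measure_pmf.expectation (bernoulli_pmf (P i j)) (\<lambda>a. (if a then 1 else 0) - P i j) = 0"
    if "(i,j) \<in> pairs n" for i j
    using Pb[OF that] by (simp add: algebra_simps)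
  have Eg2: "measure_pmf.expectation (bernoulli_pmf (P i j))
               (\<lambda>a. ((if a then 1 else 0) - P i j) * ((if a then 1 else 0) - P i j)) = P i j * (1 - P i j)"
    if "(i,j) \<in> pairs n" for i j
    using Pb[OF that] by (simp add: algebra_simps)
  have off: "measure_pmf.expectation \<Omega> (\<lambda>x. A p x * h p x * (A q x * h q x) * phi x) = 0"
    if p: "p \<in> pairs n" and q: "q \<noteq> p" for p q
  proof -
    obtain i j where pij: "p = (i,j)" by (cases p)
    have "measure_pmf.expectation \<Omega> (\<lambda>x. (\<lambda>a. (if a then 1 else 0) - P i j) (fst (x (i,j))) *
             (h p x * (A q x * h q x) * phi x)) =
          measure_pmf.expectation (bernoulli_pmf (P i j)) (\<lambda>a. (if a then 1 else 0) - P i j) *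
          measure_pmf.expectation \<Omega> (\<lambda>x. h p x * (A q x * h q x) * phi x)"
      unfolding \<Omega>_def
    proof (rule decouple_fst)
      show "(i, j) \<in> pairs n" using p pij by simp
      fix x :: outcome and a
      show "h p (x((i, j) := (a, snd (x (i, j))))) * (A q (x((i, j) := (a, snd (x (i, j))))) *
              h q (x((i, j) := (a, snd (x (i, j)))))) * phi (x((i, j) := (a, snd (x (i, j))))) =
            h p x * (A q x * h q x) * phi x"
      proof (cases "snd (x (i,j))")
        case True thus ?thesis by (simp add: h_def pij)
      next
        case False thus ?thesis using p q pij by (simp add: hinv Ainv phinv)
      qed
    qed
    thus ?thesis using Eg[of i j] p pij by (simp add: A_def mult_ac)
  qed
  have diag: "measure_pmf.expectation \<Omega> (\<lambda>x. A p x * h p x * (A p x * h p x) * phi x) =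
              P (fst p) (snd p) * (1 - P (fst p) (snd p)) * measure_pmf.expectation \<Omega> (\<lambda>x. h p x * h p x * phi x)"
    if p: "p \<in> pairs n" for p
  proof -
    obtain i j where pij: "p = (i,j)" by (cases p)
    have "measure_pmf.expectation \<Omega> (\<lambda>x. (\<lambda>a. ((if a then 1 else 0) - P i j) * ((if a then 1 else 0) - P i j)) (fst (x (i,j))) *
             (h p x * h p x * phi x)) =
          measure_pmf.expectation (bernoulli_pmf (P i j)) (\<lambda>a. ((if a then 1 else 0) - P i j) * ((if a then 1 else 0) - P i j)) *
          measure_pmf.expectation \<Omega> (\<lambda>x. h p x * h p x * phi x)"
      unfolding \<Omega>_def
    proof (rule decouple_fst)
      show "(i, j) \<in> pairs n" using p pij by simp
      fix x :: outcome and a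
      show "h p (x((i, j) := (a, snd (x (i, j))))) * h p (x((i, j) := (a, snd (x (i, j))))) *
              phi (x((i, j) := (a, snd (x (i, j))))) = h p x * h p x * phi x"
      proof (cases "snd (x (i,j))")
        case True thus ?thesis by (simp add: h_def pij)
      next
        case False thus ?thesis using p pij by (simp add: hinv phinv)
      qed
    qed
    thus ?thesis using Eg2[of i j] p pij by (simp add: A_def mult_ac)
  qed
  have "measure_pmf.expectation \<Omega> (\<lambda>x. (Cr n P D x)\<^sup>2 * phi x) =
        measure_pmf.expectation \<Omega> (\<lambda>x. \<Sum>p\<in>pairs n. \<Sum>q\<in>pairs n. A p x * h p x * (A q x * h q x) * phi x)"
    by (simp only: Csum sq_sum_mult)
  also have "\<dots> = (\<Sum>p\<in>pairs n. \<Sum>q\<in>pairs n. measure_pmf.expectation \<Omega> (\<lambda>x. A p x * h p x * (A q x * h q x) * phi x))"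
    unfolding \<Omega>_def by (simp add: Bochner_Integration.integral_sum integrable_sample)
  also have "\<dots> = (\<Sum>p\<in>pairs n. measure_pmf.expectation \<Omega> (\<lambda>x. A p x * h p x * (A p x * h p x) * phi x))"
  proof (rule sum.cong[OF refl])
    fix p assume p: "p \<in> pairs n"
    have "(\<Sum>q\<in>pairs n. measure_pmf.expectation \<Omega> (\<lambda>x. A p x * h p x * (A q x * h q x) * phi x)) =
          (\<Sum>q\<in>pairs n. if q = p then measure_pmf.expectation \<Omega> (\<lambda>x. A p x * h p x * (A p x * h p x) * phi x) else 0)"
      by (intro sum.cong refl) (auto simp: off p)
    also have "\<dots> = measure_pmf.expectation \<Omega> (\<lambda>x. A p x * h p x * (A p x * h p x) * phi x)"
      using p finite_pairs[of n] by (simp add: sum.delta')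
    finally show "(\<Sum>q\<in>pairs n. measure_pmf.expectation \<Omega> (\<lambda>x. A p x * h p x * (A q x * h q x) * phi x)) =
          measure_pmf.expectation \<Omega> (\<lambda>x. A p x * h p x * (A p x * h p x) * phi x)" .
  qed
  also have "\<dots> \<le> (\<Sum>p\<in>pairs n. s * measure_pmf.expectation \<Omega> (\<lambda>x. 2 * (if snd (x p) then 0 else
                 (D x (fst p) (snd p))\<^sup>2 + (D x (snd p) (fst p))\<^sup>2) * phi x))"
  proof (rule sum_mono)
    fix p assume p: "p \<in> pairs n"
    obtain i j where pij: "p = (i,j)" by (cases p)
    have E0: "0 \<le> measure_pmf.expectation \<Omega> (\<lambda>x. h p x * h p x * phi x)"
      by (intro Bochner_Integration.integral_nonneg mult_nonneg_nonneg phi0 zero_le_square)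
    have PP: "P i j * (1 - P i j) \<le> s"
      using Pb[of i j] Ps[of i j] p pij by (smt (verit) mult_left_le)
    have hb: "measure_pmf.expectation \<Omega> (\<lambda>x. h p x * h p x * phi x) \<le>
              measure_pmf.expectation \<Omega> (\<lambda>x. 2 * (if snd (x p) then 0 else
                 (D x (fst p) (snd p))\<^sup>2 + (D x (snd p) (fst p))\<^sup>2) * phi x)"
    proof (rule integral_mono)
      fix x
      have "h p x * h p x \<le> 2 * (if snd (x p) then 0 else
                 (D x (fst p) (snd p))\<^sup>2 + (D x (snd p) (fst p))\<^sup>2)"
      proof (cases "snd (x p)")
        case True thus ?thesis by (simp add: h_def)
      next
        case False
        define u where "u = D x (fst p) (snd p)"
        define v where "v = D x (snd p) (fst p)"
        have "2 * (u\<^sup>2 + v\<^sup>2) - (u + v) * (u + v) = (u - v)\<^sup>2"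
          by (simp add: power2_eq_square algebra_simps)
        moreover have "0 \<le> (u - v)\<^sup>2" by simp
        ultimately have "(u + v) * (u + v) \<le> 2 * (u\<^sup>2 + v\<^sup>2)" by linarith
        thus ?thesis using False by (simp add: h_def u_def[symmetric] v_def[symmetric])
      qed
      thus "h p x * h p x * phi x \<le> 2 * (if snd (x p) then 0 else
                 (D x (fst p) (snd p))\<^sup>2 + (D x (snd p) (fst p))\<^sup>2) * phi x"
        by (rule mult_right_mono) (rule phi0)
    qed (simp_all add: \<Omega>_def integrable_sample)
    have "measure_pmf.expectation \<Omega> (\<lambda>x. A p x * h p x * (A p x * h p x) * phi x) =
          P i j * (1 - P i j) * measure_pmf.expectation \<Omega> (\<lambda>x. h p x * h p x * phi x)"
      using diag[OF p] pij by simp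
    also have "\<dots> \<le> s * measure_pmf.expectation \<Omega> (\<lambda>x. h p x * h p x * phi x)"
      by (rule mult_right_mono[OF PP E0])
    also have "\<dots> \<le> s * measure_pmf.expectation \<Omega> (\<lambda>x. 2 * (if snd (x p) then 0 else
                 (D x (fst p) (snd p))\<^sup>2 + (D x (snd p) (fst p))\<^sup>2) * phi x)"
    proof (rule mult_left_mono[OF hb])
      show "0 \<le> s" using PP Pb[of i j] p pij by (smt (verit) mult_nonneg_nonneg)
    qed
    finally show "measure_pmf.expectation \<Omega> (\<lambda>x. A p x * h p x * (A p x * h p x) * phi x) \<le>
          s * measure_pmf.expectation \<Omega> (\<lambda>x. 2 * (if snd (x p) then 0 else
                 (D x (fst p) (snd p))\<^sup>2 + (D x (snd p) (fst p))\<^sup>2) * phi x)" .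
  qed
  also have "\<dots> = s * measure_pmf.expectation \<Omega> (\<lambda>x. \<Sum>p\<in>pairs n. 2 * (if snd (x p) then 0 else
                 (D x (fst p) (snd p))\<^sup>2 + (D x (snd p) (fst p))\<^sup>2) * phi x)"
    unfolding \<Omega>_def by (simp add: Bochner_Integration.integral_sum integrable_sample sum_distrib_left)
  also have "(\<lambda>x. \<Sum>p\<in>pairs n. 2 * (if snd (x p) then 0 else
                 (D x (fst p) (snd p))\<^sup>2 + (D x (snd p) (fst p))\<^sup>2) * phi x) = (\<lambda>x. 2 * (Ev n D x * phi x))"
    by (rule ext, simp only: sum_distrib_right[symmetric] sum_distrib_left[symmetric]) (simp add: Evsum)
  also have "s * measure_pmf.expectation \<Omega> (\<lambda>x. 2 * (Ev n D x * phi x)) = 2 * s * measure_pmf.expectation \<Omega> (\<lambda>x. Ev n D x * phi x)"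
    by simp
  finally show ?thesis unfolding \<Omega>_def .
qed

lemma argmin_core:
  fixes L S E C d :: "nat \<Rightarrow> real"
  assumes L_def: "\<And>m. L m = (1 / k) * S m + d m * lam"
    and S_def: "\<And>m. S m = R - 2 * C m + E m"
    and k: "k > 0" and lam: "lam > 0" and ms: "mstar \<in> {1..M}"
    and E0: "\<And>m. m \<in> {1..M} \<Longrightarrow> 0 \<le> E m"
    and over: "\<And>m. m \<in> {1..M} \<Longrightarrow> mstar < m \<Longrightarrow>
        E mstar + 2 * \<bar>C m\<bar> + 2 * \<bar>C mstar\<bar> < (d m - d mstar) * lam * k"
    and under: "\<And>m. m \<in> {1..M} \<Longrightarrow> m < mstar \<Longrightarrow>
        E mstar + 2 * \<bar>C m\<bar> + 2 * \<bar>C mstar\<bar> + (d mstar - d m) * lam * k < E m"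
  shows "argmin_set M L = {mstar}"
proof -
  have lt: "L mstar < L m" if m: "m \<in> {1..M}" "m \<noteq> mstar" for m
  proof -
    have "k * L m - k * L mstar = (S m - S mstar) + (d m - d mstar) * lam * k"
      using k by (simp add: L_def algebra_simps)
    also have "S m - S mstar = E m - E mstar - 2 * C m + 2 * C mstar"
      by (simp add: S_def)
    finally have eq: "k * L m - k * L mstar = E m - E mstar - 2 * C m + 2 * C mstar + (d m - d mstar) * lam * k" .
    have "0 < k * L m - k * L mstar"
    proof (cases "mstar < m")
      case True
      have "E mstar + 2 * \<bar>C m\<bar> + 2 * \<bar>C mstar\<bar> < (d m - d mstar) * lam * k"
        using over[OF m(1) True] .
      moreover have "0 \<le> E m" using E0 m by simp
      ultimately show ?thesis unfolding eq by (smt (verit) abs_ge_self abs_minus_cancel)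
    next
      case False
      hence mlt: "m < mstar" using m by simp
      have u: "E mstar + 2 * \<bar>C m\<bar> + 2 * \<bar>C mstar\<bar> + (d mstar - d m) * lam * k < E m"
        using under[OF m(1) mlt] .
      have "(d m - d mstar) * lam * k = - ((d mstar - d m) * lam * k)" by (simp add: algebra_simps)
      moreover have "- (2 * C m) \<ge> - (2 * \<bar>C m\<bar>)" "2 * C mstar \<ge> - (2 * \<bar>C mstar\<bar>)" by arith+
      ultimately show ?thesis unfolding eq using u by linarith
    qed
    hence "k * L mstar < k * L m" by simp
    thus ?thesis using k by simp
  qed
  have le: "L mstar \<le> L m" if "m \<in> {1..M}" for m
    using lt[OF that] by (cases "m = mstar") auto
  show ?thesis
  proof (intro set_eqI iffI)
    fix m assume "m \<in> argmin_set M L"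
    hence m: "m \<in> {1..M}" "L m \<le> L mstar" unfolding argmin_set_def using ms by auto
    show "m \<in> {mstar}" using lt[OF m(1)] m(2) by (cases "m = mstar") auto
  next
    fix m assume "m \<in> {mstar}"
    thus "m \<in> argmin_set M L" unfolding argmin_set_def using ms le by auto
  qed
qed

lemma argmin_k0:
  fixes L d :: "nat \<Rightarrow> real"
  assumes L_def: "\<And>m. L m = d m * lam" and lam: "lam > 0" and M: "1 \<le> M"
    and d_incr: "\<And>m m'. 1 \<le> m \<Longrightarrow> m < m' \<Longrightarrow> m' \<le> M \<Longrightarrow> d m < d m'"
  shows "argmin_set M L = {1}"
proof -
  have lt: "L 1 < L m" if "m \<in> {1..M}" "m \<noteq> 1" for m
    using d_incr[of 1 m] that lam by (simp add: L_def)
  have le: "L 1 \<le> L m" if "m \<in> {1..M}" for m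
    using lt[OF that] by (cases "m = 1") auto
  show ?thesis
  proof (intro set_eqI iffI)
    fix m assume "m \<in> argmin_set M L"
    hence m: "m \<in> {1..M}" "L m \<le> L 1" unfolding argmin_set_def using M by auto
    show "m \<in> {1}" using lt[OF m(1)] m(2) by (cases "m = 1") auto
  next
    fix m assume "m \<in> {1::nat}"
    thus "m \<in> argmin_set M L" unfolding argmin_set_def using M le by auto
  qed
qed

lemma sq_le_abs: 
  fixes x y :: real
  assumes "x\<^sup>2 \<le> y\<^sup>2" "0 \<le> y" shows "\<bar>x\<bar> \<le> y"
  using assms by (metis abs_le_square_iff abs_of_nonneg)

lemma arith_C_over:
  fixes Cx Ex k lam a lower s q n2 eps Cc c' eta g :: real
  assumes k: "k > 0" and lam: "lam > 0" and q: "q > 0" and s: "0 \<le> s" and a: "0 \<le> a"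
    and eps: "eps > 0" and c': "c' > 0" and Cc: "0 \<le> Cc" and g: "g > 0" and n2: "0 \<le> n2"
    and k2: "c' * n2 * q \<le> k\<^sup>2"
    and la: "a \<le> lower" and lsq: "a * q * s \<le> lower\<^sup>2" and lup: "lower \<le> eta * q * lam"
    and CE: "Cx\<^sup>2 \<le> (2 * s / eps) * Ex" and EB: "Ex \<le> Cc * n2 * a"
    and eta2: "(2 * Cc / (eps * c')) * eta\<^sup>2 \<le> g\<^sup>2 / 64"
  shows "\<bar>Cx\<bar> \<le> g * lam * k / 8"
proof -
  have l0: "0 \<le> lower" using a la by simp
  have "a * q * s \<le> (eta * q * lam)\<^sup>2"
    using lsq power_mono[OF lup l0, of 2] by linarith
  hence "q * (a * s) \<le> q * (eta\<^sup>2 * q * lam\<^sup>2)" by (simp add: power_mult_distrib algebra_simps power2_eq_square)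
  hence as: "a * s \<le> eta\<^sup>2 * q * lam\<^sup>2" using q by simp
  have "c' * a * s * n2 = (a * s) * (c' * n2)" by simp
  also have "\<dots> \<le> (eta\<^sup>2 * q * lam\<^sup>2) * (c' * n2)"
    by (rule mult_right_mono[OF as]) (use c' n2 in simp)
  also have "\<dots> = eta\<^sup>2 * lam\<^sup>2 * (c' * n2 * q)" by simp
  also have "\<dots> \<le> eta\<^sup>2 * lam\<^sup>2 * k\<^sup>2"
    by (rule mult_left_mono[OF k2]) simp
  finally have cas: "c' * a * s * n2 \<le> eta\<^sup>2 * lam\<^sup>2 * k\<^sup>2" .
  have "Cx\<^sup>2 \<le> (2 * s / eps) * (Cc * n2 * a)"
    using CE mult_left_mono[OF EB, of "2 * s / eps"] s eps by simp
  also have "\<dots> = (2 * Cc / (eps * c')) * (c' * a * s * n2)"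
    using c' eps by (simp add: field_simps)
  also have "\<dots> \<le> (2 * Cc / (eps * c')) * (eta\<^sup>2 * lam\<^sup>2 * k\<^sup>2)"
    by (rule mult_left_mono[OF cas]) (use Cc eps c' in simp)
  also have "\<dots> = ((2 * Cc / (eps * c')) * eta\<^sup>2) * (lam\<^sup>2 * k\<^sup>2)" by simp
  also have "\<dots> \<le> (g\<^sup>2 / 64) * (lam\<^sup>2 * k\<^sup>2)"
    by (rule mult_right_mono[OF eta2]) simp
  also have "\<dots> = (g * lam * k / 8)\<^sup>2" by (simp add: power_mult_distrib power_divide)
  finally show ?thesis by (rule sq_le_abs) (use g lam k in simp)
qed

lemma arith_E_over:
  fixes Ex k lam a lower q n2 Cc c' eta g :: real
  assumes lam: "lam > 0" and q: "q > 0" and a: "0 \<le> a"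
    and c': "c' > 0" and Cc: "0 \<le> Cc" and n2: "0 \<le> n2"
    and kq: "c' * n2 * q \<le> k"
    and la: "a \<le> lower" and lup: "lower \<le> eta * q * lam"
    and EB: "Ex \<le> Cc * n2 * a"
    and eta1: "Cc * eta / c' \<le> g / 8"
  shows "Ex \<le> g * lam * k / 8"
proof -
  have "Ex \<le> Cc * n2 * lower" using EB mult_left_mono[OF la, of "Cc * n2"] Cc n2 by simp
  also have "\<dots> \<le> Cc * n2 * (eta * q * lam)" by (rule mult_left_mono[OF lup]) (use Cc n2 in simp)
  also have "\<dots> = (Cc * eta / c') * lam * (c' * n2 * q)" using c' by (simp add: field_simps)
  also have "\<dots> \<le> (Cc * eta / c') * lam * k"
  proof (cases "0 \<le> Cc * eta / c'")
    case True
    have "0 \<le> (Cc * eta / c') * lam" using True lam by (intro mult_nonneg_nonneg) auto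
    thus ?thesis by (intro mult_left_mono[OF kq])
  next
    case False
    hence "eta < 0" using Cc c' by (smt (verit) divide_nonneg_pos mult_nonneg_nonneg)
    hence "lower < 0" using lup q lam by (smt (verit) mult_pos_pos mult_neg_pos)
    thus ?thesis using la a by simp
  qed
  also have "\<dots> \<le> (g / 8) * lam * k"
  proof -
    have "0 \<le> k" using kq c' n2 q by (smt (verit) mult_nonneg_nonneg)
    thus ?thesis using eta1 lam by (intro mult_right_mono) (simp_all add: mult_right_mono)
  qed
  finally show ?thesis by simp
qed

lemma arith_under:
  fixes Em Es Cm Cs k lam a lower s q n2 eps Cc c' c b G eta' eta'' :: real
  assumes k: "k > 0" and lam: "lam > 0" and q: "q > 0" and s: "0 \<le> s" "s \<le> 1" and a: "0 \<le> a"
    and eps: "eps > 0" and c': "c' > 0" and Cc: "0 \<le> Cc" and c: "c > 0" and b: "b > 0"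
    and n2: "0 \<le> n2" and G: "0 \<le> G"
    and kq: "c' * n2 * q \<le> k" and k2: "c' * n2 * q \<le> k\<^sup>2"
    and la: "a \<le> lower" and lsq: "a * q * s \<le> lower\<^sup>2" and lup: "lower \<le> eta'' * q * b"
    and EmB: "c * b * k \<le> Em" and EsB: "Es \<le> Cc * n2 * a"
    and CsE: "Cs\<^sup>2 \<le> (2 * s / eps) * Es" and CmE: "Cm\<^sup>2 \<le> (2 * s / eps) * Em"
    and lamb: "lam \<le> eta' * b" and Geta: "G * eta' \<le> c / 8"
    and e1: "Cc * eta'' / c' \<le> c / 8" and e2: "(2 * Cc / (eps * c')) * eta''\<^sup>2 \<le> c\<^sup>2 / 256"
    and big: "512 / eps \<le> c * b * (c' * n2 * q)"
  shows "Es + 2 * \<bar>Cm\<bar> + 2 * \<bar>Cs\<bar> + G * lam * k < Em"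
proof -
  have cbk: "0 < c * b * k" using c b k by simp
  have U1: "G * lam * k \<le> Em / 8"
  proof -
    have "G * lam * k \<le> G * (eta' * b) * k"
      using lamb G k by (intro mult_right_mono mult_left_mono) auto
    also have "\<dots> = (G * eta') * (b * k)" by simp
    also have "\<dots> \<le> (c / 8) * (b * k)" by (rule mult_right_mono[OF Geta]) (use b k in simp)
    finally show ?thesis using EmB by simp
  qed
  have U2: "Es \<le> c * b * k / 8"
    using arith_E_over[OF b q a c' Cc n2 kq la lup EsB e1] by simp
  have U3: "\<bar>Cs\<bar> \<le> (c / 2) * b * k / 8"
  proof (rule arith_C_over[OF k b q s(1) a eps c' Cc _ n2 k2 la lsq lup CsE EsB])
    show "0 < c / 2" using c by simp
    show "2 * Cc / (eps * c') * eta''\<^sup>2 \<le> (c / 2)\<^sup>2 / 64" using e2 by (simp add: power_divide)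
  qed
  have U4: "\<bar>Cm\<bar> \<le> Em / 16"
  proof -
    have "c * b * (c' * n2 * q) \<le> c * b * k"
      by (rule mult_left_mono[OF kq]) (use c b in simp)
    hence Ebig: "512 / eps \<le> Em" using big EmB by linarith
    have Em0: "0 \<le> Em" using EmB cbk by linarith
    have "Cm\<^sup>2 \<le> (2 * s / eps) * Em" by (rule CmE)
    also have "\<dots> \<le> (2 / eps) * Em"
      by (rule mult_right_mono[OF _ Em0]) (use s eps in \<open>simp add: divide_right_mono\<close>)
    also have "\<dots> = (512 / eps) * Em / 256" by simp
    also have "\<dots> \<le> Em * Em / 256"
      using mult_right_mono[OF Ebig Em0] by simp
    also have "\<dots> = (Em / 16)\<^sup>2" by (simp add: power2_eq_square)
    finally show ?thesis by (rule sq_le_abs) (use Em0 in simp)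
  qed
  show ?thesis using U1 U2 U3 U4 EmB cbk by linarith
qed

lemma eval_set_upd:
  assumes "\<not> snd (x p)"
  shows "eval_set n (x(p := (b, False))) = eval_set n x"
  using assms unfolding eval_set_def in_train_def by (auto split: if_splits)

lemma tinv_Ev:
  assumes "tinv n D" shows "tinv n (Ev n D)"
  using assms unfolding tinv_def Ev_def by (auto simp: eval_set_upd)

lemma Ev_nonneg: "0 \<le> Ev n D x"
  unfolding Ev_def by (intro sum_nonneg) auto

lemma finite_eval: "finite (eval_set n x)"
  by (rule finite_subset[of _ "{..<n} \<times> {..<n}"]) (auto simp: eval_set_def)

lemma Ev0_Cr0:
  assumes "Ev n D x = 0" shows "Cr n P D x = 0"
proof -
  have "\<forall>p\<in>eval_set n x. (case p of (i,j) \<Rightarrow> (D x i j)\<^sup>2) = 0"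
    using assms unfolding Ev_def
    by (subst sum_nonneg_eq_0_iff[symmetric]) (auto simp: finite_eval)
  hence "\<forall>(i,j)\<in>eval_set n x. D x i j = 0" by auto
  thus ?thesis unfolding Cr_def by (intro sum.neutral) auto
qed

lemma cross_cheb:
  fixes D :: "outcome \<Rightarrow> nat \<Rightarrow> nat \<Rightarrow> real"
  assumes Pb: "\<And>i j. (i,j) \<in> pairs n \<Longrightarrow> 0 \<le> P i j \<and> P i j \<le> 1"
    and Ps: "\<And>i j. (i,j) \<in> pairs n \<Longrightarrow> P i j \<le> s"
    and Psym: "\<And>i j. (i,j) \<in> pairs n \<Longrightarrow> P j i = P i j"
    and tD: "tinv n D" and s: "0 \<le> s" and eps: "0 < eps"
  shows "measure_pmf.prob (sample_pmf n P w) {x. (2 * s / eps) * Ev n D x < (Cr n P D x)\<^sup>2} \<le> eps"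
proof -
  define \<Omega> where "\<Omega> = sample_pmf n P w"
  define phi where "phi = (\<lambda>x. if 0 < Ev n D x then 1 / Ev n D x else 0)"
  have tE: "tinv n (Ev n D)" by (rule tinv_Ev[OF tD])
  have tphi: "tinv n phi" using tE unfolding tinv_def phi_def by simp
  have phi0: "\<And>x. 0 \<le> phi x" unfolding phi_def by simp
  have CM: "measure_pmf.expectation \<Omega> (\<lambda>x. (Cr n P D x)\<^sup>2 * phi x)
         \<le> 2 * s * measure_pmf.expectation \<Omega> (\<lambda>x. Ev n D x * phi x)"
    unfolding \<Omega>_def by (rule cross_moment[OF Pb Ps Psym tD tphi phi0])
  have "measure_pmf.expectation \<Omega> (\<lambda>x. Ev n D x * phi x) \<le> measure_pmf.expectation \<Omega> (\<lambda>x. 1)"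
    by (rule integral_mono) (auto simp: \<Omega>_def integrable_sample phi_def)
  hence E1: "measure_pmf.expectation \<Omega> (\<lambda>x. Ev n D x * phi x) \<le> 1" by simp
  have CM2: "measure_pmf.expectation \<Omega> (\<lambda>x. (Cr n P D x)\<^sup>2 * phi x) \<le> 2 * s"
    using CM mult_left_mono[OF E1, of "2 * s"] s by simp
  have sub: "{x. (2 * s / eps) * Ev n D x < (Cr n P D x)\<^sup>2} \<subseteq> {x. 2 * s / eps < (Cr n P D x)\<^sup>2 * phi x}"
  proof safe
    fix x assume a: "(2 * s / eps) * Ev n D x < (Cr n P D x)\<^sup>2"
    show "2 * s / eps < (Cr n P D x)\<^sup>2 * phi x"
    proof (cases "Ev n D x = 0")
      case True thus ?thesis using a Ev0_Cr0[OF True, of P] by simp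
    next
      case False
      hence pos: "0 < Ev n D x" using Ev_nonneg[of n D x] by simp
      thus ?thesis using a by (simp add: phi_def field_simps)
    qed
  qed
  show ?thesis
  proof (cases "s = 0")
    case False
    hence spos: "0 < 2 * s / eps" using s eps by simp
    have "measure_pmf.prob \<Omega> {x. (2 * s / eps) * Ev n D x < (Cr n P D x)\<^sup>2}
          \<le> measure_pmf.prob \<Omega> {x. 2 * s / eps \<le> (Cr n P D x)\<^sup>2 * phi x}"
      by (rule measure_pmf.finite_measure_mono) (use sub in auto)
    also have "\<dots> \<le> measure_pmf.expectation \<Omega> (\<lambda>x. (Cr n P D x)\<^sup>2 * phi x) / (2 * s / eps)"
      unfolding \<Omega>_def by (rule pmf_markov[OF fin_sample _ spos]) (simp add: phi0)
    also have "\<dots> \<le> 2 * s / (2 * s / eps)"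
      by (rule divide_right_mono[OF CM2]) (use spos in simp)
    also have "\<dots> = eps" using False s eps by simp
    finally show ?thesis unfolding \<Omega>_def .
  next
    case True
    have nn: "0 \<le> measure_pmf.expectation \<Omega> (\<lambda>x. (Cr n P D x)\<^sup>2 * phi x)"
      by (intro Bochner_Integration.integral_nonneg mult_nonneg_nonneg phi0) simp
    hence "measure_pmf.expectation \<Omega> (\<lambda>x. (Cr n P D x)\<^sup>2 * phi x) = 0" using CM2 True by simp
    hence "AE x in measure_pmf \<Omega>. (Cr n P D x)\<^sup>2 * phi x = 0"
      by (subst (asm) integral_nonneg_eq_0_iff_AE) (auto simp: \<Omega>_def integrable_sample phi0)
    hence "\<forall>y\<in>set_pmf \<Omega>. (Cr n P D y)\<^sup>2 * phi y = 0" by (simp add: AE_measure_pmf_iff)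
    hence "set_pmf \<Omega> \<inter> {x. 2 * s / eps < (Cr n P D x)\<^sup>2 * phi x} = {}" using True by auto
    hence "measure_pmf.prob \<Omega> {x. 2 * s / eps < (Cr n P D x)\<^sup>2 * phi x} = 0"
      by (simp add: measure_pmf_zero_iff)
    moreover have "measure_pmf.prob \<Omega> {x. (2 * s / eps) * Ev n D x < (Cr n P D x)\<^sup>2}
          \<le> measure_pmf.prob \<Omega> {x. 2 * s / eps < (Cr n P D x)\<^sup>2 * phi x}"
      by (rule measure_pmf.finite_measure_mono[OF sub]) simp
    ultimately show ?thesis using eps unfolding \<Omega>_def by simp
  qed
qed

lemma tinv_training:
  assumes "training_only n Ph" shows "tinv n Ph"
  unfolding tinv_def
proof (intro allI impI)
  fix x :: outcome and p b assume p: "p \<in> pairs n" and e: "\<not> snd (x p)"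
  show "Ph (x(p := (b, False))) = Ph x"
    using assms unfolding training_only_def
    by (metis (no_types, lifting) e fun_upd_apply snd_conv)
qed

lemma tinv_diff:
  assumes "tinv n Ph" shows "tinv n (\<lambda>x i j. Ph x i j - P i j)"
  using assms unfolding tinv_def by simp

lemma Ev_le_frob:
  "Ev n D x \<le> frob_sq n (D x)"
proof -
  have "Ev n D x \<le> (\<Sum>(i,j)\<in>{..<n} \<times> {..<n}. (D x i j)\<^sup>2)"
    unfolding Ev_def by (rule sum_mono2) (auto simp: eval_set_def)
  also have "\<dots> = frob_sq n (D x)"
    unfolding frob_sq_def by (simp add: sum.cartesian_product)
  finally show ?thesis .
qed

lemma loss_decomp:
  "(\<Sum>(i,j)\<in>eval_set n x. (adj x i j - Ph x i j)\<^sup>2) =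
   (\<Sum>(i,j)\<in>eval_set n x. (adj x i j - P i j)\<^sup>2) - 2 * Cr n P (\<lambda>x i j. Ph x i j - P i j) x
     + Ev n (\<lambda>x i j. Ph x i j - P i j) x"
  unfolding Cr_def Ev_def
  by (simp add: sum_subtractf[symmetric] sum.distrib[symmetric] sum_distrib_left case_prod_beta
      power2_eq_square algebra_simps)

lemma sup_norm_ge:
  assumes "i < n" "j < n" shows "\<bar>M i j\<bar> \<le> sup_norm n M"
proof -
  have fin: "finite {\<bar>M i j\<bar> | i j. i < n \<and> j < n}"
  proof -
    have "{\<bar>M i j\<bar> | i j. i < n \<and> j < n} = (\<lambda>(i,j). \<bar>M i j\<bar>) ` ({..<n} \<times> {..<n})" by auto
    thus ?thesis by simp
  qed
  show ?thesis unfolding sup_norm_def using assms fin by (intro Max_ge) auto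
qed

lemma sup_norm_nonneg: "0 \<le> sup_norm n M"
proof -
  have fin: "finite {\<bar>M i j\<bar> | i j. i < n \<and> j < n}"
  proof -
    have "{\<bar>M i j\<bar> | i j. i < n \<and> j < n} = (\<lambda>(i,j). \<bar>M i j\<bar>) ` ({..<n} \<times> {..<n})" by auto
    thus ?thesis by simp
  qed
  show ?thesis unfolding sup_norm_def using fin by (intro Max_ge) auto
qed

lemma sup_norm_le1:
  assumes "\<And>i j. i < n \<Longrightarrow> j < n \<Longrightarrow> \<bar>M i j\<bar> \<le> 1" shows "sup_norm n M \<le> 1"
proof -
  have fin: "finite {\<bar>M i j\<bar> | i j. i < n \<and> j < n}"
  proof -
    have "{\<bar>M i j\<bar> | i j. i < n \<and> j < n} = (\<lambda>(i,j). \<bar>M i j\<bar>) ` ({..<n} \<times> {..<n})" by auto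
    thus ?thesis by simp
  qed
  show ?thesis unfolding sup_norm_def using fin assms by (subst Max_le_iff) auto
qed

lemma exists_small:
  fixes A A' B B' :: real
  assumes "0 \<le> A" "0 \<le> A'" "0 < B" "0 < B'"
  shows "\<exists>eta>0. A * eta \<le> B \<and> A' * eta\<^sup>2 \<le> B'"
proof -
  define eta where "eta = min 1 (min (B / (A + 1)) (B' / (A' + 1)))"
  have pos: "0 < eta" using assms by (simp add: eta_def)
  have e1: "eta \<le> 1" by (simp add: eta_def)
  have "A * eta \<le> A * (B / (A + 1))"
    by (rule mult_left_mono) (use assms in \<open>simp_all add: eta_def\<close>)
  also have "\<dots> \<le> B" using assms by (simp add: field_simps)
  finally have 1: "A * eta \<le> B" .
  have "eta\<^sup>2 \<le> eta" using pos e1 by (simp add: power2_eq_square mult_left_le_one_le)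
  hence "A' * eta\<^sup>2 \<le> A' * eta" by (rule mult_left_mono) (use assms in simp)
  also have "\<dots> \<le> A' * (B' / (A' + 1))"
    by (rule mult_left_mono) (use assms in \<open>simp_all add: eta_def\<close>)
  also have "\<dots> \<le> B'" using assms by (simp add: field_simps)
  finally show ?thesis using 1 pos by blast
qed

lemma bigO_uniform:
  fixes X :: "nat \<Rightarrow> nat \<Rightarrow> 'a \<Rightarrow> real" and a :: "nat \<Rightarrow> nat \<Rightarrow> real"
  assumes fin: "finite S" and anon: "\<And>m n. m \<in> S \<Longrightarrow> 0 \<le> a m n"
    and h: "\<And>m. m \<in> S \<Longrightarrow> \<exists>C N. \<forall>n\<ge>N. measure_pmf.prob (Q n) {x. C * a m n < \<bar>X m n x\<bar>} \<le> eps"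
  shows "\<exists>C\<ge>1. \<exists>N. \<forall>m\<in>S. \<forall>n\<ge>N. measure_pmf.prob (Q n) {x. C * a m n < \<bar>X m n x\<bar>} \<le> eps"
proof -
  from h have "\<forall>m\<in>S. \<exists>CN. \<forall>n\<ge>snd CN. measure_pmf.prob (Q n) {x. fst CN * a m n < \<bar>X m n x\<bar>} \<le> eps"
    by auto
  then obtain f where f: "\<forall>m\<in>S. \<forall>n\<ge>snd (f m). measure_pmf.prob (Q n) {x. fst (f m) * a m n < \<bar>X m n x\<bar>} \<le> eps"
    by (metis bchoice)
  define C where "C = Max (insert 1 ((\<lambda>m. fst (f m)) ` S))"
  define N where "N = Max (insert 0 ((\<lambda>m. snd (f m)) ` S))"
  have C1: "1 \<le> C" unfolding C_def using fin by simp
  have Cge: "fst (f m) \<le> C" if "m \<in> S" for m unfolding C_def using fin that by simp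
  have Nge: "snd (f m) \<le> N" if "m \<in> S" for m unfolding N_def using fin that by simp
  have "\<forall>m\<in>S. \<forall>n\<ge>N. measure_pmf.prob (Q n) {x. C * a m n < \<bar>X m n x\<bar>} \<le> eps"
  proof (intro ballI allI impI)
    fix m n assume m: "m \<in> S" and n: "N \<le> n"
    have "{x. C * a m n < \<bar>X m n x\<bar>} \<subseteq> {x. fst (f m) * a m n < \<bar>X m n x\<bar>}"
      using mult_right_mono[OF Cge[OF m] anon[OF m, of n]] by auto
    hence "measure_pmf.prob (Q n) {x. C * a m n < \<bar>X m n x\<bar>} \<le>
           measure_pmf.prob (Q n) {x. fst (f m) * a m n < \<bar>X m n x\<bar>}"
      by (intro measure_pmf.finite_measure_mono) auto
    also have "\<dots> \<le> eps" using f m Nge[OF m] n by auto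
    finally show "measure_pmf.prob (Q n) {x. C * a m n < \<bar>X m n x\<bar>} \<le> eps" .
  qed
  thus ?thesis using C1 by blast
qed

lemma bigOmega_uniform:
  fixes Y :: "nat \<Rightarrow> nat \<Rightarrow> 'a \<Rightarrow> real" and b :: "nat \<Rightarrow> nat \<Rightarrow> real"
  assumes fin: "finite S" and bpos: "\<And>m n. m \<in> S \<Longrightarrow> 0 < b m n"
    and h: "\<And>m. m \<in> S \<Longrightarrow> \<exists>c>0. \<exists>N. \<forall>n\<ge>N. measure_pmf.prob (Q n) {x. \<bar>Y m n x\<bar> < c * b m n} \<le> eps"
  shows "\<exists>c>0. \<exists>N. \<forall>m\<in>S. \<forall>n\<ge>N. measure_pmf.prob (Q n) {x. \<bar>Y m n x\<bar> < c * b m n} \<le> eps"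
proof -
  from h have "\<forall>m\<in>S. \<exists>CN. fst CN > 0 \<and> (\<forall>n\<ge>snd CN. measure_pmf.prob (Q n) {x. \<bar>Y m n x\<bar> < fst CN * b m n} \<le> eps)"
    by auto
  then obtain f where f: "\<forall>m\<in>S. fst (f m) > 0 \<and> (\<forall>n\<ge>snd (f m). measure_pmf.prob (Q n) {x. \<bar>Y m n x\<bar> < fst (f m) * b m n} \<le> eps)"
    by (metis bchoice)
  define c where "c = Min (insert 1 ((\<lambda>m. fst (f m)) ` S))"
  define N where "N = Max (insert 0 ((\<lambda>m. snd (f m)) ` S))"
  have c0: "0 < c" unfolding c_def using fin f by (subst Min_gr_iff) auto
  have cle: "c \<le> fst (f m)" if "m \<in> S" for m unfolding c_def using fin that by simp
  have Nge: "snd (f m) \<le> N" if "m \<in> S" for m unfolding N_def using fin that by simp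
  have "\<forall>m\<in>S. \<forall>n\<ge>N. measure_pmf.prob (Q n) {x. \<bar>Y m n x\<bar> < c * b m n} \<le> eps"
  proof (intro ballI allI impI)
    fix m n assume m: "m \<in> S" and n: "N \<le> n"
    have "{x. \<bar>Y m n x\<bar> < c * b m n} \<subseteq> {x. \<bar>Y m n x\<bar> < fst (f m) * b m n}"
      using mult_right_mono[OF cle[OF m] less_imp_le[OF bpos[OF m, of n]]] by auto
    hence "measure_pmf.prob (Q n) {x. \<bar>Y m n x\<bar> < c * b m n} \<le>
           measure_pmf.prob (Q n) {x. \<bar>Y m n x\<bar> < fst (f m) * b m n}"
      by (intro measure_pmf.finite_measure_mono) auto
    also have "\<dots> \<le> eps" using f m Nge[OF m] n by auto
    finally show "measure_pmf.prob (Q n) {x. \<bar>Y m n x\<bar> < c * b m n} \<le> eps" .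
  qed
  thus ?thesis using c0 by blast
qed

lemma prob_union_finite:
  fixes A :: "nat \<Rightarrow> 'a set"
  assumes "finite I" "\<And>i. i \<in> I \<Longrightarrow> measure_pmf.prob Q (A i) \<le> eps"
  shows "measure_pmf.prob Q (\<Union>i\<in>I. A i) \<le> real (card I) * eps"
proof -
  have "measure_pmf.prob Q (\<Union>i\<in>I. A i) \<le> (\<Sum>i\<in>I. measure_pmf.prob Q (A i))"
    by (rule measure_pmf.finite_measure_subadditive_finite) (use assms in auto)
  also have "\<dots> \<le> (\<Sum>i\<in>I. eps)" by (rule sum_mono) (rule assms(2))
  finally show ?thesis by simp
qed

lemma pu: "measure_pmf.prob Q (A \<union> B) \<le> measure_pmf.prob Q A + measure_pmf.prob Q B"
  by (rule measure_Un_le) simp_all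

lemma pu6: "measure_pmf.prob Q (((((A1 \<union> A2) \<union> A3) \<union> A4) \<union> A5) \<union> A6) \<le>
  measure_pmf.prob Q A1 + measure_pmf.prob Q A2 + measure_pmf.prob Q A3 + measure_pmf.prob Q A4
  + measure_pmf.prob Q A5 + measure_pmf.prob Q A6"
proof -
  have "measure_pmf.prob Q (((((A1 \<union> A2) \<union> A3) \<union> A4) \<union> A5) \<union> A6) \<le> measure_pmf.prob Q ((((A1 \<union> A2) \<union> A3) \<union> A4) \<union> A5) + measure_pmf.prob Q A6" by (rule pu)
  moreover have "measure_pmf.prob Q ((((A1 \<union> A2) \<union> A3) \<union> A4) \<union> A5) \<le> measure_pmf.prob Q (((A1 \<union> A2) \<union> A3) \<union> A4) + measure_pmf.prob Q A5" by (rule pu)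
  moreover have "measure_pmf.prob Q (((A1 \<union> A2) \<union> A3) \<union> A4) \<le> measure_pmf.prob Q ((A1 \<union> A2) \<union> A3) + measure_pmf.prob Q A4" by (rule pu)
  moreover have "measure_pmf.prob Q ((A1 \<union> A2) \<union> A3) \<le> measure_pmf.prob Q (A1 \<union> A2) + measure_pmf.prob Q A3" by (rule pu)
  moreover have "measure_pmf.prob Q (A1 \<union> A2) \<le> measure_pmf.prob Q A1 + measure_pmf.prob Q A2" by (rule pu)
  ultimately show ?thesis by linarith
qed

theorem proposition1:
  fixes M mstar :: nat
    and P :: "nat \<Rightarrow> nat \<Rightarrow> nat \<Rightarrow> real"                   \<comment> \<open>P n i j\<close>
    and Pm :: "nat \<Rightarrow> nat \<Rightarrow> (nat \<Rightarrow> nat \<Rightarrow> real) set"   \<comment> \<open>model sets: Pm m n\<close>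
    and w :: "nat \<Rightarrow> real"
    and Phat :: "nat \<Rightarrow> nat \<Rightarrow> outcome \<Rightarrow> nat \<Rightarrow> nat \<Rightarrow> real"  \<comment> \<open>Phat m n \<omega> i j\<close>
    and d :: "nat \<Rightarrow> real"
    and lam :: "nat \<Rightarrow> outcome \<Rightarrow> real"
    and a b :: "nat \<Rightarrow> nat \<Rightarrow> real"                      \<comment> \<open>a m n, b m n\<close>
  defines "\<Omega> \<equiv> (\<lambda>n. sample_pmf n (P n) (w n))"
    and "b_min \<equiv> (\<lambda>n. Min ((\<lambda>m. b m n) ` {1..<mstar}))"
    and "lower \<equiv> (\<lambda>n. max (sqrt (Max ((\<lambda>m. a m n) ` {mstar..M}) * (1 - w n) * sup_norm n (P n)))
                          (Max ((\<lambda>m. a m n) ` {mstar..M})))"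
  assumes P_prob: "\<And>n i j. i < n \<Longrightarrow> j < n \<Longrightarrow> 0 \<le> P n i j \<and> P n i j \<le> 1"
    and P_sym: "\<And>n i j. i < n \<Longrightarrow> j < n \<Longrightarrow> P n i j = P n j i"
    and M_pos: "1 \<le> M" and mstar: "mstar \<in> {1..M}"
    and nested: "\<And>n m m'. 1 \<le> m \<Longrightarrow> m < m' \<Longrightarrow> m' \<le> M \<Longrightarrow> Pm m n \<subseteq> Pm m' n"
    and true_model: "\<And>n. P n \<in> Pm mstar n"
    and true_minimal: "\<And>n m'. 1 \<le> m' \<Longrightarrow> m' < mstar \<Longrightarrow> P n \<notin> Pm m' n"
    and w_range: "\<And>n. 0 < w n \<and> w n < 1"
    and Phat_train: "\<And>m n. m \<in> {1..M} \<Longrightarrow> training_only n (Phat m n)"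
    and d_incr: "\<And>m m'. 1 \<le> m \<Longrightarrow> m < m' \<Longrightarrow> m' \<le> M \<Longrightarrow> d m < d m'"
    and lam_pos: "\<And>n \<omega>. lam n \<omega> > 0"
    and a_nonneg: "\<And>m n. m \<in> {mstar..M} \<Longrightarrow> 0 \<le> a m n"
    and a_o1: "\<And>m. m \<in> {mstar..M} \<Longrightarrow> (\<lambda>n. a m n) \<longlonglongrightarrow> 0"
    and over_fit: "\<And>m. m \<in> {mstar..M} \<Longrightarrow>
          bigO_P \<Omega> (\<lambda>n \<omega>. frob_sq n (\<lambda>i j. Phat m n \<omega> i j - P n i j) / (real n)\<^sup>2) (\<lambda>n. a m n)"
    and b_pos: "\<And>m n. m \<in> {1..<mstar} \<Longrightarrow> 0 < b m n"
    and under_fit: "\<And>m. m \<in> {1..<mstar} \<Longrightarrow>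
          bigOmega_P \<Omega> (\<lambda>n \<omega>. (1 / real (card (eval_set n \<omega>))) *
              (\<Sum>(i,j)\<in>eval_set n \<omega>. (Phat m n \<omega> i j - P n i j)\<^sup>2)) (\<lambda>n. b m n)"
    and rate1: "1 < mstar \<Longrightarrow> filterlim (\<lambda>n. (1 - w n) * b_min n / lower n) at_top sequentially"
    and rate2: "1 < mstar \<Longrightarrow> filterlim (\<lambda>n. (real n)\<^sup>2 * (1 - w n) * b_min n) at_top sequentially"
    and lam_lower: "ll_P \<Omega> (\<lambda>n \<omega>. lower n) (\<lambda>n \<omega>. (1 - w n) * lam n \<omega>)"
    and lam_upper: "1 < mstar \<Longrightarrow> ll_P \<Omega> (\<lambda>n \<omega>. (1 - w n) * lam n \<omega>) (\<lambda>n \<omega>. (1 - w n) * b_min n)"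
  shows "(\<lambda>n. measure_pmf.prob (\<Omega> n)
            {\<omega>. argmin_set M (\<lambda>m. cv_loss n (Phat m n) (d m) (lam n \<omega>) \<omega>) = {mstar}})
         \<longlonglongrightarrow> 1"
proof -
  define amax where "amax = (\<lambda>n. Max ((\<lambda>m. a m n) ` {mstar..M}))"
  define good where "good = (\<lambda>n. {\<omega>. argmin_set M (\<lambda>m. cv_loss n (Phat m n) (d m) (lam n \<omega>) \<omega>) = {mstar}})"
  have finS: "finite {mstar..M}" by simp
  have amax_ge: "a m n \<le> amax n" if "m \<in> {mstar..M}" for m n
    using that finS by (simp add: amax_def)
  have amax0: "0 \<le> amax n" for n
    using amax_ge[of mstar n] a_nonneg[of mstar n] mstar by fastforce
  have lower_eq: "lower n = max (sqrt (amax n * (1 - w n) * sup_norm n (P n))) (amax n)" for n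
    by (simp add: lower_def amax_def)
  have w0: "0 \<le> w n" "w n \<le> 1" "0 < 1 - w n" for n using w_range[of n] by auto
  have s0: "0 \<le> sup_norm n (P n)" for n by (rule sup_norm_nonneg)
  have s1: "sup_norm n (P n) \<le> 1" for n
    by (rule sup_norm_le1) (use P_prob in force)
  have Pb: "0 \<le> P n i j \<and> P n i j \<le> 1" if "(i,j) \<in> pairs n" for n i j
    using P_prob[of i n j] that by (auto simp: pairs_def)
  have Ps: "P n i j \<le> sup_norm n (P n)" if "(i,j) \<in> pairs n" for n i j
    using sup_norm_ge[of i n j "P n"] that by (auto simp: pairs_def)
  have Psym': "P n j i = P n i j" if "(i,j) \<in> pairs n" for n i j
    using P_sym[of i n j] that by (auto simp: pairs_def)
  have tD: "tinv n (\<lambda>x i j. Phat m n x i j - P n i j)" if "m \<in> {1..M}" for m n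
    by (rule tinv_diff[OF tinv_training[OF Phat_train[OF that]]])
  define gap where "gap = (\<lambda>m. \<bar>d m - d mstar\<bar>)"
  define g where "g = Min (insert 1 (gap ` ({1..M} - {mstar})))"
  define G where "G = Max (insert 0 (gap ` ({1..M} - {mstar})))"
  have gap_pos: "0 < gap m" if "m \<in> {1..M}" "m \<noteq> mstar" for m
  proof (cases "m < mstar")
    case True thus ?thesis using d_incr[of m mstar] that mstar by (auto simp: gap_def)
  next
    case False thus ?thesis using d_incr[of mstar m] that mstar by (auto simp: gap_def)
  qed
  have g0: "0 < g" unfolding g_def using gap_pos by (subst Min_gr_iff) auto
  have g_le: "g \<le> gap m" if "m \<in> {1..M}" "m \<noteq> mstar" for m
    unfolding g_def using that by (intro Min_le) auto
  have G0: "0 \<le> G" unfolding G_def by (intro Max_ge) auto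
  have G_ge: "gap m \<le> G" if "m \<in> {1..M}" "m \<noteq> mstar" for m
    unfolding G_def using that by (intro Max_ge) auto
  have bmin_pos: "0 < b_min n" if "1 < mstar" for n
    unfolding b_min_def using that b_pos by (subst Min_gr_iff) auto
  have bmin_le: "b_min n \<le> b m n" if "m \<in> {1..<mstar}" for m n
    unfolding b_min_def using that by (intro Min_le) auto
  have claim: "\<exists>N0. \<forall>n\<ge>N0. measure_pmf.prob (\<Omega> n) (- good n) \<le> real (2 * M + 3) * eps"
    if eps: "0 < eps" "eps \<le> 1" for eps
  proof -
    define ck where "ck = eps / 4"
    define c' where "c' = ck / 2"
    have ck: "0 < ck" "ck \<le> 1/2" using eps by (auto simp: ck_def)
    have c'0: "0 < c'" using ck by (simp add: c'_def)
    define BK where "BK = (\<lambda>n. {x. 0 < Kc n x \<and> real (Kc n x) < ck * (real (card (pairs n)) * (1 - w n))})"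
    have pBK: "measure_pmf.prob (\<Omega> n) (BK n) \<le> eps" for n
      using K_small[where c=ck and w="w n" and n=n and P="P n"] ck w0[of n] by (simp add: BK_def \<Omega>_def ck_def)
    have "\<exists>C\<ge>1. \<exists>N. \<forall>m\<in>{mstar..M}. \<forall>n\<ge>N. measure_pmf.prob (\<Omega> n)
            {x. C * a m n < \<bar>frob_sq n (\<lambda>i j. Phat m n x i j - P n i j) / (real n)\<^sup>2\<bar>} \<le> eps"
    proof (rule bigO_uniform[OF finS a_nonneg])
      fix m :: nat assume m: "m \<in> {mstar..M}"
      show "\<exists>C N. \<forall>n\<ge>N. measure_pmf.prob (\<Omega> n)
            {x. C * a m n < \<bar>frob_sq n (\<lambda>i j. Phat m n x i j - P n i j) / (real n)\<^sup>2\<bar>} \<le> eps"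
        using over_fit[OF m] eps unfolding bigO_P_def by auto
    qed
    then obtain Cc N1 where Cc1: "1 \<le> Cc" and pBO0: "\<forall>m\<in>{mstar..M}. \<forall>n\<ge>N1. measure_pmf.prob (\<Omega> n)
            {x. Cc * a m n < \<bar>frob_sq n (\<lambda>i j. Phat m n x i j - P n i j) / (real n)\<^sup>2\<bar>} \<le> eps"
      by blast
    define BO where "BO = (\<lambda>m n. {x. Cc * a m n < \<bar>frob_sq n (\<lambda>i j. Phat m n x i j - P n i j) / (real n)\<^sup>2\<bar>})"
    have "\<exists>c>0. \<exists>N. \<forall>m\<in>{1..<mstar}. \<forall>n\<ge>N. measure_pmf.prob (\<Omega> n)
            {x. \<bar>(1 / real (card (eval_set n x))) * (\<Sum>(i,j)\<in>eval_set n x. (Phat m n x i j - P n i j)\<^sup>2)\<bar> < c * b m n} \<le> eps"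
    proof (rule bigOmega_uniform)
      fix m :: nat assume m: "m \<in> {1..<mstar}"
      show "\<exists>c>0. \<exists>N. \<forall>n\<ge>N. measure_pmf.prob (\<Omega> n)
            {x. \<bar>(1 / real (card (eval_set n x))) * (\<Sum>(i,j)\<in>eval_set n x. (Phat m n x i j - P n i j)\<^sup>2)\<bar> < c * b m n} \<le> eps"
        using under_fit[OF m] eps unfolding bigOmega_P_def by auto
    qed (use b_pos in auto)
    then obtain c0 N2 where c0: "0 < c0" and pBU0: "\<forall>m\<in>{1..<mstar}. \<forall>n\<ge>N2. measure_pmf.prob (\<Omega> n)
            {x. \<bar>(1 / real (card (eval_set n x))) * (\<Sum>(i,j)\<in>eval_set n x. (Phat m n x i j - P n i j)\<^sup>2)\<bar> < c0 * b m n} \<le> eps"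
      by blast
    define BU where "BU = (\<lambda>m n. {x. \<bar>(1 / real (card (eval_set n x))) * (\<Sum>(i,j)\<in>eval_set n x. (Phat m n x i j - P n i j)\<^sup>2)\<bar> < c0 * b m n})"
    define BC where "BC = (\<lambda>m n. {x. (2 * sup_norm n (P n) / eps) * Ev n (\<lambda>x i j. Phat m n x i j - P n i j) x
                                  < (Cr n (P n) (\<lambda>x i j. Phat m n x i j - P n i j) x)\<^sup>2})"
    have pBC: "measure_pmf.prob (\<Omega> n) (BC m n) \<le> eps" if m: "m \<in> {1..M}" for m n
      unfolding BC_def \<Omega>_def
      by (rule cross_cheb) (use Pb Ps Psym' tD[OF m] s0 eps in auto)
    obtain eta where eta: "0 < eta" "(Cc / c') * eta \<le> g / 8" "(2 * Cc / (eps * c')) * eta\<^sup>2 \<le> g\<^sup>2 / 64"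
      using exists_small[of "Cc / c'" "2 * Cc / (eps * c')" "g / 8" "g\<^sup>2 / 64"] Cc1 c'0 eps g0 by auto
    obtain eta'' where eta'': "0 < eta''" "(Cc / c') * eta'' \<le> c0 / 8" "(2 * Cc / (eps * c')) * eta''\<^sup>2 \<le> c0\<^sup>2 / 256"
      using exists_small[of "Cc / c'" "2 * Cc / (eps * c')" "c0 / 8" "c0\<^sup>2 / 256"] Cc1 c'0 eps c0 by auto
    define eta' where "eta' = c0 / (8 * (G + 1))"
    have eta': "0 < eta'" "G * eta' \<le> c0 / 8"
      using c0 G0 by (auto simp: eta'_def field_simps)
    define BL where "BL = (\<lambda>n. {x. eta < \<bar>lower n / ((1 - w n) * lam n x)\<bar>})"
    have limBL: "(\<lambda>n. measure_pmf.prob (\<Omega> n) (BL n)) \<longlonglongrightarrow> 0"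
      using lam_lower eta(1) unfolding ll_P_def BL_def by auto
    from LIMSEQ_D[OF limBL eps(1)] obtain N3 where "\<forall>n\<ge>N3. norm (measure_pmf.prob (\<Omega> n) (BL n) - 0) < eps"
      by blast
    hence N3: "\<forall>n\<ge>N3. measure_pmf.prob (\<Omega> n) (BL n) \<le> eps" by auto
    define BUp where "BUp = (\<lambda>n. if 1 < mstar then {x. eta' < \<bar>(1 - w n) * lam n x / ((1 - w n) * b_min n)\<bar>} else {})"
    have "\<exists>N. \<forall>n\<ge>N. measure_pmf.prob (\<Omega> n) (BUp n) \<le> eps"
    proof (cases "1 < mstar")
      case True
      have limBU: "(\<lambda>n. measure_pmf.prob (\<Omega> n) (BUp n)) \<longlonglongrightarrow> 0"
        using lam_upper[OF True] eta'(1) True unfolding ll_P_def BUp_def by auto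
      from LIMSEQ_D[OF limBU eps(1)] obtain N where "\<forall>n\<ge>N. norm (measure_pmf.prob (\<Omega> n) (BUp n) - 0) < eps"
        by blast
      thus ?thesis by (intro exI[of _ N]) auto
    next
      case False thus ?thesis using eps by (auto simp: BUp_def)
    qed
    then obtain N4 where N4: "\<forall>n\<ge>N4. measure_pmf.prob (\<Omega> n) (BUp n) \<le> eps" by blast
    have "\<exists>N. 1 < mstar \<longrightarrow> (\<forall>n\<ge>N. 1 / eta'' \<le> (1 - w n) * b_min n / lower n)"
    proof (cases "1 < mstar")
      case True
      from rate1[OF True] have "eventually (\<lambda>n. 1 / eta'' \<le> (1 - w n) * b_min n / lower n) sequentially"
        by (simp add: filterlim_at_top)
      thus ?thesis by (auto simp: eventually_sequentially)
    qed auto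
    then obtain N5 where N5: "1 < mstar \<Longrightarrow> \<forall>n\<ge>N5. 1 / eta'' \<le> (1 - w n) * b_min n / lower n" by blast
    have "\<exists>N. 1 < mstar \<longrightarrow> (\<forall>n\<ge>N. 512 / (eps * c0 * c') \<le> (real n)\<^sup>2 * (1 - w n) * b_min n)"
    proof (cases "1 < mstar")
      case True
      from rate2[OF True] have "eventually (\<lambda>n. 512 / (eps * c0 * c') \<le> (real n)\<^sup>2 * (1 - w n) * b_min n) sequentially"
        by (simp add: filterlim_at_top)
      thus ?thesis by (auto simp: eventually_sequentially)
    qed auto
    then obtain N6 where N6: "1 < mstar \<Longrightarrow> \<forall>n\<ge>N6. 512 / (eps * c0 * c') \<le> (real n)\<^sup>2 * (1 - w n) * b_min n" by blast
    define Nst where "Nst = N1 + N2 + N3 + N4 + N5 + N6 + 2"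
    have key: "x \<in> good n"
      if n: "Nst \<le> n" and xK: "x \<notin> BK n" and xO: "\<forall>m\<in>{mstar..M}. x \<notin> BO m n"
        and xU: "\<forall>m\<in>{1..<mstar}. x \<notin> BU m n" and xC: "\<forall>m\<in>{1..M}. x \<notin> BC m n"
        and xL: "x \<notin> BL n" and xUp: "x \<notin> BUp n" for n x
    proof -
      have nge: "2 \<le> n" "N1 \<le> n" "N2 \<le> n" "N5 \<le> n" "N6 \<le> n" using n by (auto simp: Nst_def)
      define k where "k = real (card (eval_set n x))"
      have k_eq: "k = 2 * real (Kc n x)" by (simp add: k_def card_eval)
      define lm where "lm = lam n x"
      have lm0: "0 < lm" using lam_pos by (simp add: lm_def)
      define q where "q = 1 - w n"
      have q0: "0 < q" using w0(3)[of n] by (simp add: q_def)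
      define s where "s = sup_norm n (P n)"
      have s01: "0 \<le> s" "s \<le> 1" using s0[of n] s1[of n] by (auto simp: s_def)
      define Dm where "Dm = (\<lambda>m. (\<lambda>x i j. Phat m n x i j - P n i j))"
      define Em where "Em = (\<lambda>m. Ev n (Dm m) x)"
      define Cm where "Cm = (\<lambda>m. Cr n (P n) (Dm m) x)"
      define R where "R = (\<Sum>(i,j)\<in>eval_set n x. (adj x i j - P n i j)\<^sup>2)"
      define n2 where "n2 = (real n)\<^sup>2"
      have n20: "0 < n2" using nge by (simp add: n2_def)
      have Cc0: "0 \<le> Cc" using Cc1 by simp
      have Lform: "cv_loss n (Phat m n) (d m) lm x = (1 / k) * (\<Sum>(i,j)\<in>eval_set n x. (adj x i j - Phat m n x i j)\<^sup>2) + d m * lm" for m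
        by (simp add: cv_loss_def k_def)
      have Sform: "(\<Sum>(i,j)\<in>eval_set n x. (adj x i j - Phat m n x i j)\<^sup>2) = R - 2 * Cm m + Em m" for m
        unfolding R_def Cm_def Em_def Dm_def by (rule loss_decomp)
      show ?thesis
      proof (cases "Kc n x = 0")
        case True
        hence k0: "k = 0" by (simp add: k_eq)
        show ?thesis
        proof (cases "mstar = 1")
          case True
          have "argmin_set M (\<lambda>m. cv_loss n (Phat m n) (d m) (lam n x) x) = {1}"
            by (rule argmin_k0[OF _ lam_pos M_pos d_incr]) (use k0 in \<open>simp add: cv_loss_def k_def\<close>)
          thus ?thesis using True by (simp add: good_def)
        next
          case False
          hence m1: "1 \<in> {1..<mstar}" using mstar by auto
          have "x \<notin> BU 1 n" using xU m1 by blast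
          hence "c0 * b 1 n \<le> 0" using k0 by (simp add: BU_def k_def)
          moreover have "0 < c0 * b 1 n" using c0 b_pos[OF m1] by simp
          ultimately show ?thesis by simp
        qed
      next
        case False
        hence Kpos: "0 < Kc n x" by simp
        have Kge: "ck * (real (card (pairs n)) * q) \<le> real (Kc n x)"
          using xK Kpos by (auto simp: BK_def q_def not_less)
        have k0: "0 < k" using Kpos k_eq by simp
        have k1: "2 \<le> k" using Kpos k_eq by simp
        have Nge: "n2 / 4 \<le> real (card (pairs n))"
        proof -
          have "2 \<le> real n" using nge by simp
          hence "real n * real n \<le> 2 * (real n * (real n - 1))" by (simp add: algebra_simps)
          thus ?thesis by (simp add: card_pairs n2_def power2_eq_square)
        qed
        have kq: "c' * n2 * q \<le> k"
        proof -
          have "c' * n2 * q = 2 * ck * (n2 / 4) * q" by (simp add: c'_def)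
          also have "\<dots> \<le> 2 * ck * real (card (pairs n)) * q"
            using Nge ck q0 by (intro mult_right_mono mult_left_mono) auto
          also have "\<dots> \<le> 2 * real (Kc n x)" using Kge by (simp add: mult_ac)
          finally show ?thesis by (simp add: k_eq)
        qed
        have k2: "c' * n2 * q \<le> k\<^sup>2"
        proof -
          have "k \<le> k\<^sup>2" using k1 by (simp add: power2_eq_square)
          thus ?thesis using kq by linarith
        qed
        have EB: "Em m \<le> Cc * n2 * amax n" if m: "m \<in> {mstar..M}" for m
        proof -
          have "x \<notin> BO m n" using xO m by blast
          hence ab: "\<bar>frob_sq n (\<lambda>i j. Phat m n x i j - P n i j) / (real n)\<^sup>2\<bar> \<le> Cc * a m n"
            by (simp add: BO_def not_less)
          have f0: "0 \<le> frob_sq n (\<lambda>i j. Phat m n x i j - P n i j)"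
            unfolding frob_sq_def by (intro sum_nonneg) auto
          have "frob_sq n (\<lambda>i j. Phat m n x i j - P n i j) / n2 \<le> Cc * a m n"
            using ab f0 n20 by (simp add: n2_def)
          hence fb: "frob_sq n (\<lambda>i j. Phat m n x i j - P n i j) \<le> Cc * a m n * n2"
            using n20 by (simp add: divide_le_eq)
          have "Em m \<le> frob_sq n (\<lambda>i j. Phat m n x i j - P n i j)"
            unfolding Em_def Dm_def by (rule Ev_le_frob)
          also have "\<dots> \<le> Cc * a m n * n2" by (rule fb)
          also have "\<dots> \<le> Cc * amax n * n2"
            using amax_ge[OF m, of n] Cc0 n20 by (intro mult_right_mono mult_left_mono) auto
          finally show ?thesis by (simp add: mult_ac)
        qed
        have CE: "(Cm m)\<^sup>2 \<le> (2 * s / eps) * Em m" if m: "m \<in> {1..M}" for m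
        proof -
          have "x \<notin> BC m n" using xC m by blast
          thus ?thesis by (simp add: BC_def not_less Cm_def Em_def Dm_def s_def)
        qed
        have la: "amax n \<le> lower n" by (simp add: lower_eq)
        have lsq: "amax n * q * s \<le> (lower n)\<^sup>2"
        proof -
          have v0: "0 \<le> amax n * q * s" using amax0[of n] q0 s01 by simp
          have "sqrt (amax n * q * s) \<le> lower n" by (simp add: lower_eq q_def s_def)
          hence "(sqrt (amax n * q * s))\<^sup>2 \<le> (lower n)\<^sup>2" by (rule power_mono) (use v0 in simp)
          thus ?thesis using v0 by simp
        qed
        have lup: "lower n \<le> eta * q * lm"
        proof -
          have "\<bar>lower n / (q * lm)\<bar> \<le> eta" using xL by (simp add: BL_def not_less q_def lm_def)
          hence "lower n / (q * lm) \<le> eta" by (meson abs_ge_self order_trans)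
          thus ?thesis using q0 lm0 by (simp add: divide_le_eq mult_ac)
        qed
        have ms: "mstar \<in> {mstar..M}" using mstar by simp
        have msM: "mstar \<in> {1..M}" using mstar by simp
        have over: "Em mstar + 2 * \<bar>Cm m\<bar> + 2 * \<bar>Cm mstar\<bar> < (d m - d mstar) * lm * k"
          if m: "m \<in> {1..M}" "mstar < m" for m
        proof -
          have mS: "m \<in> {mstar..M}" using m by simp
          have e2: "(2 * Cc / (eps * c')) * eta\<^sup>2 \<le> g\<^sup>2 / 64" using eta(3) .
          have e1: "Cc * eta / c' \<le> g / 8" using eta(2) by simp
          have C1: "\<bar>Cm m\<bar> \<le> g * lm * k / 8"
            by (rule arith_C_over[OF k0 lm0 q0 s01(1) amax0 eps(1) c'0 Cc0 g0 less_imp_le[OF n20] k2 la lsq lup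
                  CE[OF m(1)] EB[OF mS] e2])
          have C2: "\<bar>Cm mstar\<bar> \<le> g * lm * k / 8"
            by (rule arith_C_over[OF k0 lm0 q0 s01(1) amax0 eps(1) c'0 Cc0 g0 less_imp_le[OF n20] k2 la lsq lup
                  CE[OF msM] EB[OF ms] e2])
          have E1: "Em mstar \<le> g * lm * k / 8"
            by (rule arith_E_over[OF lm0 q0 amax0 c'0 Cc0 less_imp_le[OF n20] kq la lup EB[OF ms] e1])
          have gd: "g \<le> d m - d mstar"
            using g_le[of m] m d_incr[of mstar m] mstar by (auto simp: gap_def)
          have "g * lm * k \<le> (d m - d mstar) * lm * k"
            using gd lm0 k0 by (intro mult_right_mono) auto
          moreover have "0 < g * lm * k" using g0 lm0 k0 by simp
          ultimately show ?thesis using C1 C2 E1 by linarith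
        qed
        have under: "Em mstar + 2 * \<bar>Cm m\<bar> + 2 * \<bar>Cm mstar\<bar> + (d mstar - d m) * lm * k < Em m"
          if m: "m \<in> {1..M}" "m < mstar" for m
        proof -
          have mU: "m \<in> {1..<mstar}" using m by simp
          have ms1: "1 < mstar" using m by simp
          have bmp: "0 < b_min n" by (rule bmin_pos[OF ms1])
          have "x \<notin> BU m n" using xU mU by blast
          hence "c0 * b m n \<le> \<bar>(1 / k) * Em m\<bar>"
            by (simp add: BU_def not_less k_def Em_def Dm_def Ev_def)
          also have "\<dots> = Em m / k" using Ev_nonneg[of n "Dm m" x] k0 by (simp add: Em_def)
          finally have "c0 * b m n * k \<le> Em m" using k0 by (simp add: le_divide_eq)
          moreover have "c0 * b_min n * k \<le> c0 * b m n * k"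
            using bmin_le[OF mU, of n] c0 k0 by (intro mult_right_mono mult_left_mono) auto
          ultimately have EmB: "c0 * b_min n * k \<le> Em m" by linarith
          have lamb: "lm \<le> eta' * b_min n"
          proof -
            have "x \<notin> BUp n" by (rule xUp)
            hence "\<bar>q * lm / (q * b_min n)\<bar> \<le> eta'" using ms1 by (simp add: BUp_def not_less q_def lm_def)
            hence "q * lm / (q * b_min n) \<le> eta'" by (meson abs_ge_self order_trans)
            hence "lm / b_min n \<le> eta'" using q0 by simp
            thus ?thesis using bmp by (simp add: divide_le_eq)
          qed
          have lup'': "lower n \<le> eta'' * q * b_min n"
          proof (cases "lower n = 0")
            case True thus ?thesis using eta''(1) q0 bmp by simp
          next
            case False
            hence lp: "0 < lower n" using la amax0[of n] by linarith
            have "1 / eta'' \<le> q * b_min n / lower n" using N5[OF ms1] nge by (simp add: q_def)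
            hence "lower n / eta'' \<le> q * b_min n" using lp by (simp add: field_simps)
            thus ?thesis using eta''(1) by (simp add: divide_le_eq mult_ac)
          qed
          have big: "512 / eps \<le> c0 * b_min n * (c' * n2 * q)"
          proof -
            have "512 / (eps * c0 * c') \<le> n2 * q * b_min n" using N6[OF ms1] nge by (simp add: q_def n2_def)
            hence "512 / (eps * c0 * c') * (c0 * c') \<le> n2 * q * b_min n * (c0 * c')"
              using c0 c'0 by (intro mult_right_mono) auto
            moreover have "512 / (eps * c0 * c') * (c0 * c') = 512 / eps" using c0 c'0 by (simp add: field_simps)
            ultimately show ?thesis by (simp add: mult_ac)
          qed
          have e1: "Cc * eta'' / c' \<le> c0 / 8" using eta''(2) by simp
          have Gd: "d mstar - d m \<le> G"
            using G_ge[of m] m d_incr[of m mstar] mstar by (auto simp: gap_def)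
          have "(d mstar - d m) * lm * k \<le> G * lm * k"
            using Gd lm0 k0 by (intro mult_right_mono) auto
          moreover have "Em mstar + 2 * \<bar>Cm m\<bar> + 2 * \<bar>Cm mstar\<bar> + G * lm * k < Em m"
            by (rule arith_under[OF k0 lm0 q0 s01 amax0 eps(1) c'0 Cc0 c0 bmp less_imp_le[OF n20] G0 kq k2 la lsq lup''
                  EmB EB[OF ms] CE[OF msM] CE[OF m(1)] lamb eta'(2) e1 eta''(3) big])
          ultimately show ?thesis by linarith
        qed
        have "argmin_set M (\<lambda>m. cv_loss n (Phat m n) (d m) lm x) = {mstar}"
          by (rule argmin_core[where S = "\<lambda>m. (\<Sum>(i,j)\<in>eval_set n x. (adj x i j - Phat m n x i j)\<^sup>2)"
                and R = R and C = Cm and E = Em and k = k and lam = lm and d = d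
                and L = "\<lambda>m. cv_loss n (Phat m n) (d m) lm x"])
             (use Lform Sform k0 lm0 mstar Ev_nonneg over under in \<open>auto simp: Em_def\<close>)
        thus ?thesis by (simp add: good_def lm_def)
      qed
    qed

    show ?thesis
    proof (intro exI[of _ Nst] allI impI)
      fix n assume n: "Nst \<le> n"
      have sub: "- good n \<subseteq> ((((BK n \<union> (\<Union>m\<in>{mstar..M}. BO m n)) \<union> (\<Union>m\<in>{1..<mstar}. BU m n))
                   \<union> (\<Union>m\<in>{1..M}. BC m n)) \<union> BL n) \<union> BUp n"
        using key[OF n] by blast
      have "measure_pmf.prob (\<Omega> n) (- good n) \<le> measure_pmf.prob (\<Omega> n) (((((BK n \<union> (\<Union>m\<in>{mstar..M}. BO m n)) \<union> (\<Union>m\<in>{1..<mstar}. BU m n))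
                   \<union> (\<Union>m\<in>{1..M}. BC m n)) \<union> BL n) \<union> BUp n)"
        by (rule measure_pmf.finite_measure_mono[OF sub]) simp
      also have "\<dots> \<le> measure_pmf.prob (\<Omega> n) (BK n) + measure_pmf.prob (\<Omega> n) (\<Union>m\<in>{mstar..M}. BO m n)
          + measure_pmf.prob (\<Omega> n) (\<Union>m\<in>{1..<mstar}. BU m n) + measure_pmf.prob (\<Omega> n) (\<Union>m\<in>{1..M}. BC m n)
          + measure_pmf.prob (\<Omega> n) (BL n) + measure_pmf.prob (\<Omega> n) (BUp n)"
        by (rule pu6)
      also have "\<dots> \<le> eps + real (card {mstar..M}) * eps + real (card {1..<mstar}) * eps + real (card {1..M}) * eps
          + eps + eps"
      proof -
        have "measure_pmf.prob (\<Omega> n) (\<Union>m\<in>{mstar..M}. BO m n) \<le> real (card {mstar..M}) * eps"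
          by (rule prob_union_finite) (use pBO0 n in \<open>auto simp: BO_def Nst_def\<close>)
        moreover have "measure_pmf.prob (\<Omega> n) (\<Union>m\<in>{1..<mstar}. BU m n) \<le> real (card {1..<mstar}) * eps"
          by (rule prob_union_finite) (use pBU0 n in \<open>auto simp: BU_def Nst_def\<close>)
        moreover have "measure_pmf.prob (\<Omega> n) (\<Union>m\<in>{1..M}. BC m n) \<le> real (card {1..M}) * eps"
          by (rule prob_union_finite) (use pBC in auto)
        moreover have "measure_pmf.prob (\<Omega> n) (BL n) \<le> eps" using N3 n by (auto simp: Nst_def)
        moreover have "measure_pmf.prob (\<Omega> n) (BUp n) \<le> eps" using N4 n by (auto simp: Nst_def)
        ultimately show ?thesis using pBK[of n] by linarith
      qed
      also have "\<dots> = real (2 * M + 3) * eps"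
      proof -
        have "card {mstar..M} + card {1..<mstar} = M" using mstar by auto
        hence "real (card {mstar..M}) + real (card {1..<mstar}) = real M" by linarith
        thus ?thesis by (simp add: algebra_simps)
      qed
      finally show "measure_pmf.prob (\<Omega> n) (- good n) \<le> real (2 * M + 3) * eps" .
    qed
  qed

  have lim0: "(\<lambda>n. measure_pmf.prob (\<Omega> n) (- good n)) \<longlonglongrightarrow> 0"
  proof (rule LIMSEQ_I)
    fix r :: real assume r: "0 < r"
    define eps where "eps = min 1 (r / (2 * real (2 * M + 3)))"
    have e0: "0 < eps" "eps \<le> 1" using r by (auto simp: eps_def intro!: divide_pos_pos)
    obtain N0 where N0: "\<forall>n\<ge>N0. measure_pmf.prob (\<Omega> n) (- good n) \<le> real (2 * M + 3) * eps"
      using claim[OF e0] by blast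
    have "real (2 * M + 3) * eps \<le> real (2 * M + 3) * (r / (2 * real (2 * M + 3)))"
      by (rule mult_left_mono) (auto simp: eps_def)
    also have "\<dots> = r / 2"
    proof -
      have "real (2 * M + 3) \<noteq> 0" by simp
      thus ?thesis by (simp add: field_simps)
    qed
    also have "\<dots> < r" using r by simp
    finally have lt: "real (2 * M + 3) * eps < r" .
    show "\<exists>no. \<forall>n\<ge>no. norm (measure_pmf.prob (\<Omega> n) (- good n) - 0) < r"
      using N0 lt by (intro exI[of _ N0]) auto
  qed
  have "(\<lambda>n. 1 - measure_pmf.prob (\<Omega> n) (- good n)) \<longlonglongrightarrow> 1 - 0"
    by (intro tendsto_diff tendsto_const lim0)
  moreover have "measure_pmf.prob (\<Omega> n) (good n) = 1 - measure_pmf.prob (\<Omega> n) (- good n)" for n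
    using measure_pmf.prob_compl[of "good n" "\<Omega> n"] by (simp add: Compl_eq_Diff_UNIV)
  ultimately show ?thesis unfolding good_def by simp
qed


end
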